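(* For every real $\varepsilon>0$ and every $n\ge1$, $\varepsilon\text{-}\operatorname{Proj}_{\mathbb{R}^n}$ is computable, i.e. it has a computable realizer.
   Context: Represented spaces: a representation of a set $X$ is a partial surjection $\delta_X:\subseteq\mathbb{N}^\mathbb{N}\to X$. For a partial multi-valued function $f:\subseteq X\rightrightarrows Y$, a realizer is a partial $F:\subseteq\mathbb{N}^\mathbb{N}\to\mathbb{N}^\mathbb{N}$ with $\delta_Y(F(p))\in f(\delta_X(p))$ for all $p$ with $\delta_X(p)\in\mathrm{dom}(f)$; $f$ is computable if it has a realizer computed by a Turing machine on infinite sequences. $\mathbb{R}^n$ has the Euclidean metric and the Cauchy representation (names are sequences $(q_i)$ in $\mathbb{Q}^n$ with $d(q_i,q_j)\le2^{-i}$ for $j\ge i$, naming the limit). Basic balls are open balls $B(c,r)$ with $c\in\mathbb{Q}^n$, $r$ a nonnegative rational. $\mathcal{A}(\mathbb{R}^n)$ (total information): a name of a closed set $A$ consists of an enumeration of basic balls whose union is $\mathbb{R}^n\setminus A$ together with an enumeration of exactly the basic balls meeting $A$. For $\varepsilon>0$, $\varepsilon\text{-}\operatorname{Proj}_{\mathbb{R}^n}:\subseteq\mathbb{R}^n\times\mathcal{A}(\mathbb{R}^n)\rightrightarrows\mathbb{R}^n$ maps $(x,A)$ with $A$ nonempty closed to the set of $y\in A$ with $d(x,y)\le(1+\varepsilon)\,d(x,A)$ ($\varepsilon$ is fixed, not part of the input). *)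

theory Defs
  imports "HOL-Analysis.Analysis" "HOL-Library.Nat_Bijection"
begin

datatype recf = Z | S | Id nat | Cn recf "recf list" | Pr recf recf | Mn recf

inductive rec_eval :: "recf \<Rightarrow> nat list \<Rightarrow> nat \<Rightarrow> bool" where
  ev_Z:  "rec_eval Z xs 0"
| ev_S:  "rec_eval S (x # xs) (Suc x)"
| ev_Id: "i < length xs \<Longrightarrow> rec_eval (Id i) xs (xs ! i)"
| ev_Cn: "list_all2 (\<lambda>g y. rec_eval g xs y) gs ys \<Longrightarrow> rec_eval f ys z \<Longrightarrow> rec_eval (Cn f gs) xs z"
| ev_Pr0: "rec_eval f xs z \<Longrightarrow> rec_eval (Pr f g) (0 # xs) z"
| ev_PrS: "rec_eval (Pr f g) (y # xs) r \<Longrightarrow> rec_eval g (y # r # xs) z \<Longrightarrow> rec_eval (Pr f g) (Suc y # xs) z"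
| ev_Mn: "rec_eval f (y # xs) 0 \<Longrightarrow> (\<forall>z<y. \<exists>v. 0 < v \<and> rec_eval f (z # xs) v) \<Longrightarrow> rec_eval (Mn f) xs y"

definition total_recursive :: "(nat \<Rightarrow> nat) \<Rightarrow> bool" where
  "total_recursive h \<longleftrightarrow> (\<exists>f. \<forall>x. rec_eval f [x] (h x))"

definition prefix_code :: "(nat \<Rightarrow> nat) \<Rightarrow> nat \<Rightarrow> nat" where
  "prefix_code p k = list_encode (map p [0..<k])"

text \<open>The total recursive word function h computes output q from input p:
  h(n, p|k) is either 0 (no answer yet) or Suc (q n), and eventually Suc (q n).
  This is the standard characterisation of functions computed by Type-2 machines.\<close>
definition computes_on :: "(nat \<Rightarrow> nat) \<Rightarrow> (nat \<Rightarrow> nat) \<Rightarrow> (nat \<Rightarrow> nat) \<Rightarrow> bool" where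
  "computes_on h p q \<longleftrightarrow>
     (\<forall>n. (\<exists>k. h (prod_encode (n, prefix_code p k)) = Suc (q n)) \<and>
          (\<forall>k. h (prod_encode (n, prefix_code p k)) \<in> {0, Suc (q n)}))"

text \<open>Representations are given as naming relations delta p x ("p is a name of x").
  A partial multi-valued f with domain D is computable iff it has a computable realizer.\<close>
definition computable_mv ::
  "((nat \<Rightarrow> nat) \<Rightarrow> 'a \<Rightarrow> bool) \<Rightarrow> ((nat \<Rightarrow> nat) \<Rightarrow> 'b \<Rightarrow> bool) \<Rightarrow> 'a set \<Rightarrow> ('a \<Rightarrow> 'b set) \<Rightarrow> bool" where
  "computable_mv \<delta>X \<delta>Y D f \<longleftrightarrow>
     (\<exists>h. total_recursive h \<and>
        (\<forall>p x. \<delta>X p x \<and> x \<in> D \<longrightarrow> (\<exists>q y. computes_on h p q \<and> \<delta>Y q y \<and> y \<in> f x)))"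

definition pair_rep :: "((nat \<Rightarrow> nat) \<Rightarrow> 'a \<Rightarrow> bool) \<Rightarrow> ((nat \<Rightarrow> nat) \<Rightarrow> 'b \<Rightarrow> bool) \<Rightarrow> (nat \<Rightarrow> nat) \<Rightarrow> 'a \<times> 'b \<Rightarrow> bool" where
  "pair_rep \<delta>1 \<delta>2 p xy \<longleftrightarrow> \<delta>1 (\<lambda>i. p (2 * i)) (fst xy) \<and> \<delta>2 (\<lambda>i. p (2 * i + 1)) (snd xy)"

definition rat_code :: "nat \<Rightarrow> rat" where
  "rat_code k = (case prod_decode k of (a, b) \<Rightarrow> Fract (int_decode a) (int b))"

definition coord_idx :: "'n::finite \<Rightarrow> nat" where
  "coord_idx = (SOME f. bij_betw f (UNIV :: 'n set) {..<CARD('n)})"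

definition qvec :: "nat \<Rightarrow> real ^ 'n::finite" where
  "qvec k = (\<chi> j. let l = list_decode k in
                   of_rat (rat_code (if coord_idx j < length l then l ! coord_idx j else 0)))"

definition basic_ball :: "nat \<Rightarrow> (real ^ 'n::finite) set" where
  "basic_ball k = (case prod_decode k of (a, b) \<Rightarrow> ball (qvec a) \<bar>of_rat (rat_code b)\<bar>)"

definition enumerated :: "(nat \<Rightarrow> nat) \<Rightarrow> nat set" where
  "enumerated p = {k. \<exists>i. p i = Suc k}"

definition cauchy_rep :: "(nat \<Rightarrow> nat) \<Rightarrow> real ^ 'n::finite \<Rightarrow> bool" where
  "cauchy_rep p x \<longleftrightarrow>
     (\<forall>i j. i \<le> j \<longrightarrow> dist (qvec (p i) :: real ^ 'n) (qvec (p j)) \<le> (1/2) ^ i) \<and>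
     ((\<lambda>i. qvec (p i) :: real ^ 'n) \<longlonglongrightarrow> x)"

definition closed_rep :: "(nat \<Rightarrow> nat) \<Rightarrow> (real ^ 'n::finite) set \<Rightarrow> bool" where
  "closed_rep p A \<longleftrightarrow> closed A \<and>
     (\<Union>k \<in> enumerated (\<lambda>i. p (2 * i)). basic_ball k) = - A \<and>
     enumerated (\<lambda>i. p (2 * i + 1)) = {k. basic_ball k \<inter> A \<noteq> {}}"

definition eps_proj :: "real \<Rightarrow> (real ^ 'n::finite) \<times> (real ^ 'n) set \<Rightarrow> (real ^ 'n) set" where
  "eps_proj \<epsilon> xA = {y \<in> snd xA. dist (fst xA) y \<le> (1 + \<epsilon>) * infdist (fst xA) (snd xA)}"

definition eps_proj_dom :: "((real ^ 'n::finite) \<times> (real ^ 'n) set) set" where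
  "eps_proj_dom = {xA. closed (snd xA) \<and> snd xA \<noteq> {}}"

end

theory Submission
  imports Defs
begin

definition prog :: "nat \<Rightarrow> (nat list \<Rightarrow> nat) \<Rightarrow> bool" where
  "prog k g \<longleftrightarrow> (\<exists>f. \<forall>xs. length xs = k \<longrightarrow> rec_eval f xs (g xs))"

lemma prog_cong: "prog k g \<Longrightarrow> (\<And>xs. length xs = k \<Longrightarrow> g xs = h xs) \<Longrightarrow> prog k h"
  unfolding prog_def by (elim exE) (rule exI, auto)

lemma prog_Z: "prog k (\<lambda>_. 0)"
  unfolding prog_def by (metis rec_eval.ev_Z)

lemma prog_Id: "i < k \<Longrightarrow> prog k (\<lambda>xs. xs ! i)"
  unfolding prog_def by (metis rec_eval.ev_Id)

lemma prog_S: "prog 1 (\<lambda>xs. Suc (hd xs))"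
  unfolding prog_def
proof (intro exI allI impI)
  fix xs :: "nat list" assume "length xs = 1"
  then obtain x where "xs = [x]" by (cases xs) auto
  then show "rec_eval S xs (Suc (hd xs))" by (simp add: rec_eval.ev_S)
qed

lemma list_all2_ex: "\<forall>g\<in>set gs. \<exists>G. P G g \<Longrightarrow> \<exists>Gs. list_all2 P Gs gs"
proof (induction gs)
  case Nil then show ?case by auto
next
  case (Cons g gs)
  then obtain G Gs where "P G g" "list_all2 P Gs gs" by auto
  then show ?case by (intro exI[of _ "G # Gs"]) auto
qed

lemma prog_Cn:
  assumes f: "prog (length gs) f" and gs: "\<forall>g\<in>set gs. prog k g"
  shows "prog k (\<lambda>xs. f (map (\<lambda>g. g xs) gs))"
proof -
  obtain F where F: "\<forall>ys. length ys = length gs \<longrightarrow> rec_eval F ys (f ys)" using f prog_def by metis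
  obtain Gs where Gs: "list_all2 (\<lambda>G g. \<forall>xs. length xs = k \<longrightarrow> rec_eval G xs (g xs)) Gs gs"
    using list_all2_ex[of gs "\<lambda>G g. \<forall>xs. length xs = k \<longrightarrow> rec_eval G xs (g xs)"] gs
    unfolding prog_def by blast
  show ?thesis unfolding prog_def
  proof (intro exI allI impI)
    fix xs :: "nat list" assume xs: "length xs = k"
    have "list_all2 (\<lambda>G y. rec_eval G xs y) Gs (map (\<lambda>g. g xs) gs)"
      using Gs xs by (auto simp: list_all2_map2 elim!: list_all2_mono)
    then show "rec_eval (Cn F Gs) xs (f (map (\<lambda>g. g xs) gs))"
      using F by (intro rec_eval.ev_Cn) auto
  qed
qed

lemma prog_Pr:
  assumes f: "prog k f" and g: "prog (Suc (Suc k)) g"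
  shows "prog (Suc k) (\<lambda>xs. rec_nat (f (tl xs)) (\<lambda>y r. g (y # r # tl xs)) (hd xs))"
proof -
  obtain F where F: "\<forall>ys. length ys = k \<longrightarrow> rec_eval F ys (f ys)" using f prog_def by metis
  obtain G where G: "\<forall>ys. length ys = Suc (Suc k) \<longrightarrow> rec_eval G ys (g ys)" using g prog_def by metis
  have *: "rec_eval (Pr F G) (y # zs) (rec_nat (f zs) (\<lambda>y r. g (y # r # zs)) y)" if "length zs = k" for y zs
  proof (induction y)
    case 0 then show ?case using F that by (simp add: rec_eval.ev_Pr0)
  next
    case (Suc y) then show ?case using G that by (auto intro: rec_eval.ev_PrS)
  qed
  show ?thesis unfolding prog_def
  proof (intro exI allI impI)
    fix xs :: "nat list" assume "length xs = Suc k"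
    then obtain y zs where "xs = y # zs" "length zs = k" by (cases xs) auto
    then show "rec_eval (Pr F G) xs (rec_nat (f (tl xs)) (\<lambda>y r. g (y # r # tl xs)) (hd xs))"
      using * by simp
  qed
qed

lemma prog_Mn:
  assumes f: "prog (Suc k) f" and ex: "\<And>xs. length xs = k \<Longrightarrow> \<exists>y. f (y # xs) = 0"
  shows "prog k (\<lambda>xs. LEAST y. f (y # xs) = 0)"
proof -
  obtain F where F: "\<forall>ys. length ys = Suc k \<longrightarrow> rec_eval F ys (f ys)" using f prog_def by metis
  show ?thesis unfolding prog_def
  proof (intro exI allI impI)
    fix xs :: "nat list" assume xs: "length xs = k"
    let ?y = "LEAST y. f (y # xs) = 0"
    have f0: "f (?y # xs) = 0" using ex[OF xs] by (rule LeastI_ex)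
    have "rec_eval F (?y # xs) 0" using F xs f0 by (metis length_Cons)
    moreover have "\<forall>z<?y. \<exists>v. 0 < v \<and> rec_eval F (z # xs) v"
    proof (intro allI impI)
      fix z assume "z < ?y"
      then have "f (z # xs) \<noteq> 0" by (rule not_less_Least)
      moreover have "rec_eval F (z # xs) (f (z # xs))" using F xs by simp
      ultimately show "\<exists>v. 0 < v \<and> rec_eval F (z # xs) v" by blast
    qed
    ultimately show "rec_eval (Mn F) xs ?y" by (intro rec_eval.ev_Mn)
  qed
qed

lemma prog_comp1: "prog 1 f \<Longrightarrow> prog k g \<Longrightarrow> prog k (\<lambda>xs. f [g xs])"
  using prog_Cn[of "[g]" f k] by simp

lemma prog_comp2: "prog 2 f \<Longrightarrow> prog k g \<Longrightarrow> prog k h \<Longrightarrow> prog k (\<lambda>xs. f [g xs, h xs])"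
  using prog_Cn[of "[g, h]" f k] by (simp add: numeral_2_eq_2)

lemma prog_comp3: "prog 3 f \<Longrightarrow> prog k g \<Longrightarrow> prog k h \<Longrightarrow> prog k l \<Longrightarrow> prog k (\<lambda>xs. f [g xs, h xs, l xs])"
  using prog_Cn[of "[g, h, l]" f k] by (simp add: numeral_3_eq_3)

lemma prog_Sk: "prog k g \<Longrightarrow> prog k (\<lambda>xs. Suc (g xs))"
  using prog_comp1[OF prog_S] by simp

lemma prog_add: "prog 2 (\<lambda>xs. xs ! 0 + xs ! 1)"
proof -
  have "prog 2 (\<lambda>xs. rec_nat (tl xs ! 0) (\<lambda>y r. Suc r) (hd xs))"
    using prog_Pr[of 1 "\<lambda>xs. xs ! 0" "\<lambda>xs. Suc (xs ! 1)"] prog_Id prog_Sk[of 3 "\<lambda>xs. xs ! 1"]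
    by (simp add: numeral_2_eq_2 numeral_3_eq_3)
  then show ?thesis
  proof (rule prog_cong)
    fix xs :: "nat list" assume "length xs = 2"
    then obtain a b where "xs = [a, b]" by (cases xs; cases "tl xs") (auto simp: numeral_2_eq_2)
    then show "rec_nat (tl xs ! 0) (\<lambda>y r. Suc r) (hd xs) = xs ! 0 + xs ! 1"
      by (induction a arbitrary: xs) auto
  qed
qed

lemma len2E: "length xs = 2 \<Longrightarrow> (\<And>a b. xs = [a, b] \<Longrightarrow> P) \<Longrightarrow> P"
  by (cases xs; cases "tl xs") (auto simp: numeral_2_eq_2)

lemma len1E: "length xs = 1 \<Longrightarrow> (\<And>a. xs = [a] \<Longrightarrow> P) \<Longrightarrow> P"
  by (cases xs) auto

lemma prog_const: "prog k (\<lambda>_. c)"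
  by (induction c) (auto intro: prog_Z prog_Sk)

lemma prog_pred: "prog 1 (\<lambda>xs. xs ! 0 - 1)"
proof -
  have "prog 1 (\<lambda>xs. rec_nat 0 (\<lambda>y r. y) (hd xs))"
    using prog_Pr[of 0 "\<lambda>_. 0" "\<lambda>xs. xs ! 0"] prog_Z prog_Id[of 0 2] by (simp add: numeral_2_eq_2)
  then show ?thesis
    by (rule prog_cong) (erule len1E, case_tac a, auto)
qed

lemma prog_monus: "prog 2 (\<lambda>xs. xs ! 1 - xs ! 0)"
proof -
  have "prog 2 (\<lambda>xs. rec_nat (tl xs ! 0) (\<lambda>y r. r - 1) (hd xs))"
    using prog_Pr[of 1 "\<lambda>xs. xs ! 0" "\<lambda>xs. xs ! 1 - 1"] prog_Id
      prog_comp1[OF prog_pred, of 3 "\<lambda>xs. xs ! 1"]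
    by (simp add: numeral_2_eq_2 numeral_3_eq_3)
  then show ?thesis
  proof (rule prog_cong)
    fix xs :: "nat list" assume "length xs = 2"
    then obtain a b where "xs = [a, b]" by (rule len2E)
    then show "rec_nat (tl xs ! 0) (\<lambda>y r. r - 1) (hd xs) = xs ! 1 - xs ! 0"
      by (induction a arbitrary: xs) auto
  qed
qed

lemma prog_mult: "prog 2 (\<lambda>xs. xs ! 0 * xs ! 1)"
proof -
  have "prog 2 (\<lambda>xs. rec_nat 0 (\<lambda>y r. r + tl xs ! 0) (hd xs))"
    using prog_Pr[of 1 "\<lambda>xs. 0" "\<lambda>xs. xs ! 1 + xs ! 2"] prog_Z
      prog_comp2[OF prog_add, of 3 "\<lambda>xs. xs ! 1" "\<lambda>xs. xs ! 2"] prog_Id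
    by (simp add: numeral_2_eq_2 numeral_3_eq_3)
  then show ?thesis
  proof (rule prog_cong)
    fix xs :: "nat list" assume "length xs = 2"
    then obtain a b where "xs = [a, b]" by (rule len2E)
    then show "rec_nat 0 (\<lambda>y r. r + tl xs ! 0) (hd xs) = xs ! 0 * xs ! 1"
      by (induction a arbitrary: xs) auto
  qed
qed

lemma prog_triangle: "prog 1 (\<lambda>xs. triangle (xs ! 0))"
proof -
  have "prog 1 (\<lambda>xs. rec_nat 0 (\<lambda>y r. r + Suc y) (hd xs))"
    using prog_Pr[of 0 "\<lambda>xs. 0" "\<lambda>xs. xs ! 1 + Suc (xs ! 0)"] prog_Z
      prog_comp2[OF prog_add, of 2 "\<lambda>xs. xs ! 1" "\<lambda>xs. Suc (xs ! 0)"] prog_Id prog_Sk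
    by (simp add: numeral_2_eq_2)
  then show ?thesis
  proof (rule prog_cong)
    fix xs :: "nat list" assume "length xs = 1"
    then obtain a where "xs = [a]" by (rule len1E)
    then show "rec_nat 0 (\<lambda>y r. r + Suc y) (hd xs) = triangle (xs ! 0)"
      by (induction a arbitrary: xs) auto
  qed
qed

lemma prog_prod_encode: "prog 2 (\<lambda>xs. prod_encode (xs ! 0, xs ! 1))"
proof -
  have "prog 2 (\<lambda>xs. triangle (xs ! 0 + xs ! 1) + xs ! 0)"
    using prog_comp2[OF prog_add, of 2 "\<lambda>xs. triangle (xs ! 0 + xs ! 1)" "\<lambda>xs. xs ! 0"]
      prog_comp1[OF prog_triangle prog_add] prog_Id[of 0 2] by simp
  then show ?thesis by (simp add: prod_encode_def)
qed

definition tri_root :: "nat \<Rightarrow> nat" where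
  "tri_root n = (LEAST k. Suc n - triangle (Suc k) = 0)"

lemma tri_root_ex: "\<exists>k. Suc n - triangle (Suc k) = 0"
proof -
  show ?thesis by (rule exI[of _ n]) simp
qed

lemma tri_root: "triangle (tri_root n) \<le> n \<and> n < triangle (Suc (tri_root n))"
proof -
  let ?K = "tri_root n"
  have 1: "Suc n - triangle (Suc ?K) = 0" unfolding tri_root_def using tri_root_ex by (rule LeastI_ex)
  have 2: "triangle ?K \<le> n"
  proof (cases ?K)
    case 0 then show ?thesis by simp
  next
    case (Suc j)
    then have "j < ?K" by simp
    then have "Suc n - triangle (Suc j) \<noteq> 0" unfolding tri_root_def by (rule not_less_Least)
    then show ?thesis using Suc by simp
  qed
  show ?thesis using 1 2 by simp
qed

lemma prod_decode_tri_root: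
  "prod_decode n = (n - triangle (tri_root n), tri_root n - (n - triangle (tri_root n)))"
proof -
  let ?K = "tri_root n" let ?m = "n - triangle ?K"
  have "n = triangle ?K + ?m" "?m \<le> ?K" using tri_root[of n] by auto
  then have "prod_decode n = prod_decode_aux ?K ?m" by (metis prod_decode_triangle_add)
  also have "\<dots> = (?m, ?K - ?m)" using \<open>?m \<le> ?K\<close> by (simp add: prod_decode_aux.simps)
  finally show ?thesis .
qed

lemma prog_tri_root: "prog 1 (\<lambda>xs. tri_root (xs ! 0))"
proof -
  have "prog 2 (\<lambda>xs. Suc (xs ! 1) - triangle (Suc (xs ! 0)))"
    using prog_comp2[OF prog_monus, of 2 "\<lambda>xs. triangle (Suc (xs ! 0))" "\<lambda>xs. Suc (xs ! 1)"]
      prog_comp1[OF prog_triangle, of 2 "\<lambda>xs. Suc (xs ! 0)"] prog_Sk prog_Id by simp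
  then have "prog (Suc 1) (\<lambda>xs. Suc (xs ! 1) - triangle (Suc (xs ! 0)))" by (simp only: Suc_1)
  then have "prog 1 (\<lambda>xs. LEAST y. Suc ((y # xs) ! 1) - triangle (Suc ((y # xs) ! 0)) = 0)"
    by (rule prog_Mn) (metis tri_root_ex nth_Cons_0 nth_Cons_Suc One_nat_def)
  then show ?thesis by (rule prog_cong) (auto simp: tri_root_def elim!: len1E)
qed

lemma prog_pfst: "prog 1 (\<lambda>xs. fst (prod_decode (xs ! 0)))"
proof -
  have "prog 1 (\<lambda>xs. xs ! 0 - triangle (tri_root (xs ! 0)))"
    using prog_comp2[OF prog_monus, of 1 "\<lambda>xs. triangle (tri_root (xs ! 0))" "\<lambda>xs. xs ! 0"]
      prog_comp1[OF prog_triangle prog_tri_root] prog_Id[of 0 1] by simp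
  then show ?thesis by (simp add: prod_decode_tri_root)
qed

lemma prog_psnd: "prog 1 (\<lambda>xs. snd (prod_decode (xs ! 0)))"
proof -
  have "prog 1 (\<lambda>xs. tri_root (xs ! 0) - fst (prod_decode (xs ! 0)))"
    using prog_comp2[OF prog_monus, of 1 "\<lambda>xs. fst (prod_decode (xs ! 0))" "\<lambda>xs. tri_root (xs ! 0)"]
      prog_pfst prog_tri_root by simp
  then show ?thesis
    by (rule prog_cong) (metis prod_decode_tri_root snd_conv fst_conv)
qed


named_theorems rf_intros

definition rf :: "(nat \<Rightarrow> nat) \<Rightarrow> bool" where
  "rf g \<longleftrightarrow> prog 1 (\<lambda>xs. g (xs ! 0))"

lemma rf_total_recursive: "rf h \<Longrightarrow> total_recursive h"
  unfolding rf_def prog_def total_recursive_def by (metis length_Cons list.size(3) nth_Cons_0 One_nat_def)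

lemma rf_prog: "rf g \<Longrightarrow> prog k h \<Longrightarrow> prog k (\<lambda>xs. g (h xs))"
  unfolding rf_def using prog_comp1 by fastforce

lemma rf_of_prog1: "prog 1 f \<Longrightarrow> rf g \<Longrightarrow> rf (\<lambda>x. f [g x])"
  unfolding rf_def using prog_comp1 by fastforce

lemma rf_of_prog2: "prog 2 f \<Longrightarrow> rf g \<Longrightarrow> rf h \<Longrightarrow> rf (\<lambda>x. f [g x, h x])"
  unfolding rf_def using prog_comp2 by fastforce

lemma rf_id [rf_intros]: "rf (\<lambda>x. x)"
  unfolding rf_def using prog_Id[of 0 1] by simp

lemma rf_const [rf_intros]: "rf (\<lambda>x. c)"
  unfolding rf_def using prog_const by simp

lemma rf_Suc [rf_intros]: "rf g \<Longrightarrow> rf (\<lambda>x. Suc (g x))"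
  unfolding rf_def using prog_Sk by fastforce

lemma rf_add [rf_intros]: "rf g \<Longrightarrow> rf h \<Longrightarrow> rf (\<lambda>x. g x + h x)"
  using rf_of_prog2[OF prog_add] by fastforce

lemma rf_sub [rf_intros]: "rf g \<Longrightarrow> rf h \<Longrightarrow> rf (\<lambda>x. g x - h x)"
  using rf_of_prog2[OF prog_monus, of h g] by fastforce

lemma rf_mult [rf_intros]: "rf g \<Longrightarrow> rf h \<Longrightarrow> rf (\<lambda>x. g x * h x)"
  using rf_of_prog2[OF prog_mult] by fastforce

lemma rf_pair [rf_intros]: "rf g \<Longrightarrow> rf h \<Longrightarrow> rf (\<lambda>x. prod_encode (g x, h x))"
  using rf_of_prog2[OF prog_prod_encode] by fastforce

lemma rf_pfst [rf_intros]: "rf g \<Longrightarrow> rf (\<lambda>x. fst (prod_decode (g x)))"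
  using rf_of_prog1[OF prog_pfst] by fastforce

lemma rf_psnd [rf_intros]: "rf g \<Longrightarrow> rf (\<lambda>x. snd (prod_decode (g x)))"
  using rf_of_prog1[OF prog_psnd] by fastforce

lemma rf_comp: "rf f \<Longrightarrow> rf g \<Longrightarrow> rf (\<lambda>x. f (g x))"
  unfolding rf_def by (drule prog_comp1[of _ 1 "\<lambda>xs. g (xs ! 0)"]) auto

lemma rf_rec_nat [rf_intros]:
  assumes a: "rf a" and b: "rf b"
    and G: "rf (\<lambda>z. G (fst (prod_decode z)) (fst (prod_decode (snd (prod_decode z)))) (snd (prod_decode (snd (prod_decode z)))))"
  shows "rf (\<lambda>x. rec_nat (a x) (G x) (b x))"
proof -
  let ?G3 = "\<lambda>z. G (fst (prod_decode z)) (fst (prod_decode (snd (prod_decode z)))) (snd (prod_decode (snd (prod_decode z))))"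
  have p3: "prog 3 (\<lambda>xs. prod_encode (xs ! 2, prod_encode (xs ! 0, xs ! 1)))"
    using prog_comp2[OF prog_prod_encode, of 3 "\<lambda>xs. xs ! 2" "\<lambda>xs. prod_encode (xs ! 0, xs ! 1)"]
      prog_comp2[OF prog_prod_encode, of 3 "\<lambda>xs. xs ! 0" "\<lambda>xs. xs ! 1"] prog_Id by simp
  have g: "prog (Suc (Suc 1)) (\<lambda>xs. ?G3 (prod_encode (xs ! 2, prod_encode (xs ! 0, xs ! 1))))"
    using rf_prog[OF G p3] by (simp add: numeral_3_eq_3)
  have f: "prog 1 (\<lambda>xs. a (xs ! 0))" using a rf_def by blast
  have "prog (Suc 1) (\<lambda>xs. rec_nat (a (tl xs ! 0)) (\<lambda>y r. ?G3 (prod_encode ((y # r # tl xs) ! 2, prod_encode ((y # r # tl xs) ! 0, (y # r # tl xs) ! 1)))) (hd xs))"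
    using prog_Pr[OF f g] by simp
  then have P: "prog (Suc 1) (\<lambda>xs. rec_nat (a (xs ! 1)) (G (xs ! 1)) (xs ! 0))"
    by (rule prog_cong) (auto simp: length_Suc_conv)
  then have P: "prog 2 (\<lambda>xs. rec_nat (a (xs ! 1)) (G (xs ! 1)) (xs ! 0))"
    by (simp only: Suc_1)
  have "rf (\<lambda>x. (\<lambda>xs. rec_nat (a (xs ! 1)) (G (xs ! 1)) (xs ! 0)) [b x, x])"
    by (rule rf_of_prog2[OF P b rf_id])
  then show ?thesis by simp
qed

definition rp :: "(nat \<Rightarrow> bool) \<Rightarrow> bool" where
  "rp P \<longleftrightarrow> rf (\<lambda>x. if P x then 1 else 0)"

lemma rf_if [rf_intros]: "rp P \<Longrightarrow> rf g \<Longrightarrow> rf h \<Longrightarrow> rf (\<lambda>x. if P x then g x else h x)"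
proof -
  assume "rp P" "rf g" "rf h"
  then have "rf (\<lambda>x. (if P x then 1 else 0) * g x + (1 - (if P x then 1 else 0)) * h x)"
    unfolding rp_def by (intro rf_add rf_mult rf_sub rf_const)
  then show ?thesis by (rule back_subst[of rf]) auto
qed

lemma rp_le [rf_intros]: "rf g \<Longrightarrow> rf h \<Longrightarrow> rp (\<lambda>x. g x \<le> h x)"
proof -
  assume "rf g" "rf h"
  then have "rf (\<lambda>x. 1 - (g x - h x))" by (intro rf_sub rf_const)
  then show ?thesis unfolding rp_def by (rule back_subst[of rf]) auto
qed

lemma rp_not [rf_intros]: "rp P \<Longrightarrow> rp (\<lambda>x. \<not> P x)"
proof -
  assume "rp P"
  then have "rf (\<lambda>x. 1 - (if P x then 1 else 0))" unfolding rp_def by (intro rf_sub rf_const)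
  then show ?thesis unfolding rp_def by (rule back_subst[of rf]) auto
qed

lemma rp_and [rf_intros]: "rp P \<Longrightarrow> rp Q \<Longrightarrow> rp (\<lambda>x. P x \<and> Q x)"
proof -
  assume "rp P" "rp Q"
  then have "rf (\<lambda>x. (if P x then 1 else 0) * (if Q x then 1 else 0))" unfolding rp_def by (intro rf_mult)
  then show ?thesis unfolding rp_def by (rule back_subst[of rf]) auto
qed

lemma rp_or [rf_intros]: "rp P \<Longrightarrow> rp Q \<Longrightarrow> rp (\<lambda>x. P x \<or> Q x)"
proof -
  assume "rp P" "rp Q"
  then have "rp (\<lambda>x. \<not> (\<not> P x \<and> \<not> Q x))" by (intro rp_not rp_and)
  then show ?thesis by simp
qed

lemma rp_imp [rf_intros]: "rp P \<Longrightarrow> rp Q \<Longrightarrow> rp (\<lambda>x. P x \<longrightarrow> Q x)"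
proof -
  assume "rp P" "rp Q"
  then have "rp (\<lambda>x. \<not> P x \<or> Q x)" by (intro rp_not rp_or)
  then show ?thesis by simp
qed

lemma rp_true [rf_intros]: "rp (\<lambda>x. True)" and rp_false [rf_intros]: "rp (\<lambda>x. False)"
  unfolding rp_def by (simp_all add: rf_const)

lemma rp_less [rf_intros]: "rf g \<Longrightarrow> rf h \<Longrightarrow> rp (\<lambda>x. g x < h x)"
proof -
  assume "rf g" "rf h"
  then have "rp (\<lambda>x. \<not> h x \<le> g x)" by (intro rp_not rp_le)
  then show ?thesis by (simp add: not_le)
qed

lemma rp_eq [rf_intros]: "rf g \<Longrightarrow> rf h \<Longrightarrow> rp (\<lambda>x. g x = h x)"
proof -
  assume "rf g" "rf h"
  then have "rp (\<lambda>x. g x \<le> h x \<and> h x \<le> g x)" by (intro rp_and rp_le)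
  then show ?thesis by (simp add: eq_iff)
qed

lemma rp_rf: "rf g \<Longrightarrow> rp (\<lambda>x. g x \<noteq> 0)"
  by (intro rp_not rp_eq rf_const)


abbreviation pfst :: "nat \<Rightarrow> nat" where "pfst z \<equiv> fst (prod_decode z)"
abbreviation psnd :: "nat \<Rightarrow> nat" where "psnd z \<equiv> snd (prod_decode z)"

lemma rf_comp2: "rf (\<lambda>z. F (pfst z) (psnd z)) \<Longrightarrow> rf g \<Longrightarrow> rf h \<Longrightarrow> rf (\<lambda>x. F (g x) (h x))"
  using rf_comp[of "\<lambda>z. F (pfst z) (psnd z)" "\<lambda>x. prod_encode (g x, h x)"] rf_pair by simp

lemma rf_comp3: "rf (\<lambda>z. F (pfst z) (pfst (psnd z)) (psnd (psnd z))) \<Longrightarrow> rf g \<Longrightarrow> rf h \<Longrightarrow> rf k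
   \<Longrightarrow> rf (\<lambda>x. F (g x) (h x) (k x))"
  using rf_comp[of "\<lambda>z. F (pfst z) (pfst (psnd z)) (psnd (psnd z))" "\<lambda>x. prod_encode (g x, prod_encode (h x, k x))"] rf_pair by simp

lemma rp_comp: "rp P \<Longrightarrow> rf g \<Longrightarrow> rp (\<lambda>x. P (g x))"
  unfolding rp_def using rf_comp[of "\<lambda>x. if P x then 1 else 0" g] by simp

lemma rp_comp2: "rp (\<lambda>z. P (pfst z) (psnd z)) \<Longrightarrow> rf g \<Longrightarrow> rf h \<Longrightarrow> rp (\<lambda>x. P (g x) (h x))"
  using rp_comp[of "\<lambda>z. P (pfst z) (psnd z)" "\<lambda>x. prod_encode (g x, h x)"] rf_pair by simp

lemma rp_bex [rf_intros]:
  assumes P: "rp (\<lambda>z. P (pfst z) (psnd z))" and b: "rf b"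
  shows "rp (\<lambda>x. \<exists>i<b x. P x i)"
proof -
  have R: "rf (\<lambda>x. rec_nat 0 (\<lambda>i r. if P x i then 1 else r) (b x))"
  proof (rule rf_rec_nat[OF rf_const b])
    show "rf (\<lambda>z. if P (pfst z) (pfst (psnd z)) then 1 else psnd (psnd z))"
      by (intro rf_if rf_const rf_psnd rf_id rp_comp2[OF P] rf_pfst)
  qed
  have "rec_nat 0 (\<lambda>i r. if P x i then 1 else r) n = (if \<exists>i<n. P x i then 1 else 0)" for x n
    by (induction n) (auto simp: less_Suc_eq)
  then have eq: "(\<lambda>x. rec_nat 0 (\<lambda>i r. if P x i then 1 else r) (b x)) = (\<lambda>x. if \<exists>i<b x. P x i then 1 else 0)"
    by (intro ext) blast
  show ?thesis unfolding rp_def by (subst eq[symmetric]) (rule R)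
qed

lemma rp_ball [rf_intros]:
  assumes P: "rp (\<lambda>z. P (pfst z) (psnd z))" and b: "rf b"
  shows "rp (\<lambda>x. \<forall>i<b x. P x i)"
proof -
  have "rp (\<lambda>z. \<not> P (pfst z) (psnd z))" using P by (rule rp_not)
  then have "rp (\<lambda>x. \<not> (\<exists>i<b x. \<not> P x i))" using b by (rule rp_not[OF rp_bex])
  then show ?thesis by simp
qed

definition ndiv :: "nat \<Rightarrow> nat \<Rightarrow> nat" where
  "ndiv x d = (if d = 0 then 0 else rec_nat 0 (\<lambda>q r. if Suc q * d \<le> x then Suc r else r) x)"

lemma ndiv_eq: "ndiv x d = x div d"
proof (cases "d = 0")
  case True then show ?thesis by (simp add: ndiv_def)
next
  case False
  have "rec_nat 0 (\<lambda>q r. if Suc q * d \<le> x then Suc r else r) n = min n (x div d)" for n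
  proof (induction n)
    case 0 then show ?case by simp
  next
    case (Suc n)
    have "Suc n * d \<le> x \<longleftrightarrow> n < x div d" using False
      by (metis less_eq_div_iff_mult_less_eq mult.commute not_gr_zero Suc_le_eq)
    then show ?case using Suc by auto
  qed
  from this[of x] False have "ndiv x d = min x (x div d)" by (simp add: ndiv_def)
  also have "\<dots> = x div d" by (simp add: min_absorb2 div_le_dividend)
  finally show ?thesis .
qed

lemma rf_div [rf_intros]: "rf g \<Longrightarrow> rf h \<Longrightarrow> rf (\<lambda>x. g x div h x)"
proof -
  have "rf (\<lambda>z. ndiv (pfst z) (psnd z))" unfolding ndiv_def
    by (intro rf_intros rf_rec_nat rp_eq rf_mult) 
  then have "rf (\<lambda>z. pfst z div psnd z)" by (simp add: ndiv_eq)
  then show "rf g \<Longrightarrow> rf h \<Longrightarrow> rf (\<lambda>x. g x div h x)" by (rule rf_comp2)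
qed

lemma rf_mod [rf_intros]: "rf g \<Longrightarrow> rf h \<Longrightarrow> rf (\<lambda>x. g x mod h x)"
proof -
  assume "rf g" "rf h"
  then have "rf (\<lambda>x. g x - h x * (g x div h x))" by (intro rf_intros)
  then show ?thesis by (simp add: minus_mult_div_eq_mod)
qed

lemma rf_power [rf_intros]: "rf g \<Longrightarrow> rf h \<Longrightarrow> rf (\<lambda>x. g x ^ h x)"
proof -
  have "rf (\<lambda>z. rec_nat 1 (\<lambda>_ r. r * pfst z) (psnd z))"
    by (intro rf_intros)
  moreover have "rec_nat 1 (\<lambda>_ r. r * a) n = a ^ n" for a n :: nat by (induction n) auto
  ultimately have "rf (\<lambda>z. pfst z ^ psnd z)" by simp
  then show "rf g \<Longrightarrow> rf h \<Longrightarrow> rf (\<lambda>x. g x ^ h x)" by (rule rf_comp2)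
qed

lemma prod_decode_0 [simp]: "prod_decode 0 = (0, 0)" by (simp add: prod_decode_def prod_decode_aux.simps)

definition tlc :: "nat \<Rightarrow> nat" where "tlc c = psnd (c - 1)"
definition hdc :: "nat \<Rightarrow> nat" where "hdc c = pfst (c - 1)"
definition dropc :: "nat \<Rightarrow> nat \<Rightarrow> nat" where "dropc c i = rec_nat c (\<lambda>_ r. tlc r) i"
definition nthd :: "nat \<Rightarrow> nat \<Rightarrow> nat" where
  "nthd c i = (if dropc c i = 0 then 0 else hdc (dropc c i))"
definition lenc :: "nat \<Rightarrow> nat" where
  "lenc c = rec_nat 0 (\<lambda>i r. if dropc c i = 0 then r else Suc r) c"

lemma dropc_Suc: "dropc c (Suc i) = tlc (dropc c i)" by (simp add: dropc_def)

lemma tlc_encode [simp]: "tlc (list_encode (x # xs)) = list_encode xs" by (simp add: tlc_def)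
lemma hdc_encode [simp]: "hdc (list_encode (x # xs)) = x" by (simp add: hdc_def)

lemma list_encode_eq_0: "list_encode xs = 0 \<longleftrightarrow> xs = []" by (cases xs) auto

lemma dropc_encode: "dropc (list_encode xs) i = list_encode (drop i xs)"
proof (induction i arbitrary: xs)
  case 0 then show ?case by (simp add: dropc_def)
next
  case (Suc i)

  have "dropc (list_encode xs) (Suc i) = tlc (list_encode (drop i xs))" by (simp add: dropc_Suc Suc)
  also have "\<dots> = list_encode (drop (Suc i) xs)"
    by (cases "drop i xs") (auto simp: tlc_def drop_Suc drop_tl dest: arg_cong[of _ _ tl])
  finally show ?case .
qed

lemma nthd_encode: "nthd (list_encode xs) i = (if i < length xs then xs ! i else 0)"
  unfolding nthd_def dropc_encode
  by (cases "drop i xs") (auto simp: list_encode_eq_0 hdc_def nth_via_drop)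

lemma le_triangle: "n \<le> triangle n" by (induction n) auto

lemma length_le_list_encode: "length xs \<le> list_encode xs"
proof (induction xs)
  case (Cons x xs)
  have "list_encode xs \<le> prod_encode (x, list_encode xs)"
    using le_triangle[of "x + list_encode xs"] by (simp add: prod_encode_def)
  then show ?case using Cons by simp
qed simp

lemma lenc_encode: "lenc (list_encode xs) = length xs"
proof -
  have "rec_nat 0 (\<lambda>i r. if dropc (list_encode xs) i = 0 then r else Suc r) n = min n (length xs)" for n
    by (induction n) (auto simp: dropc_encode list_encode_eq_0)
  then show ?thesis using length_le_list_encode[of xs] by (simp add: lenc_def min_def)
qed

lemma nthd_decode: "nthd c i = (if i < length (list_decode c) then list_decode c ! i else 0)"
  using nthd_encode[of "list_decode c"] by simp

lemma rf_tlc [rf_intros]: "rf g \<Longrightarrow> rf (\<lambda>x. tlc (g x))" unfolding tlc_def by (intro rf_intros)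
lemma rf_hdc [rf_intros]: "rf g \<Longrightarrow> rf (\<lambda>x. hdc (g x))" unfolding hdc_def by (intro rf_intros)

lemma rf_dropc [rf_intros]: "rf g \<Longrightarrow> rf h \<Longrightarrow> rf (\<lambda>x. dropc (g x) (h x))"
proof -
  have "rf (\<lambda>z. dropc (pfst z) (psnd z))" unfolding dropc_def by (intro rf_intros)
  then show "rf g \<Longrightarrow> rf h \<Longrightarrow> rf (\<lambda>x. dropc (g x) (h x))" by (rule rf_comp2)
qed

lemma rf_nthd [rf_intros]: "rf g \<Longrightarrow> rf h \<Longrightarrow> rf (\<lambda>x. nthd (g x) (h x))"
  unfolding nthd_def by (intro rf_intros)

lemma rf_lenc [rf_intros]: "rf g \<Longrightarrow> rf (\<lambda>x. lenc (g x))"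
proof -
  have "rf (\<lambda>z. lenc z)" unfolding lenc_def by (intro rf_intros)
  then show "rf g \<Longrightarrow> rf (\<lambda>x. lenc (g x))" by (rule rf_comp)
qed


section \<open>Rational triples\<close>

definition rt :: "nat \<Rightarrow> nat \<Rightarrow> nat \<Rightarrow> nat" where "rt p q d = prod_encode (p, prod_encode (q, d))"
abbreviation rN :: "nat \<Rightarrow> nat" where "rN c \<equiv> pfst c"
abbreviation rM :: "nat \<Rightarrow> nat" where "rM c \<equiv> pfst (psnd c)"
abbreviation rD :: "nat \<Rightarrow> nat" where "rD c \<equiv> Suc (psnd (psnd c))"

definition rv :: "nat \<Rightarrow> real" where "rv c = (real (rN c) - real (rM c)) / real (rD c)"

lemma rt_acc [simp]: "pfst (rt p q d) = p" "pfst (psnd (rt p q d)) = q" "psnd (psnd (rt p q d)) = d"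
  by (simp_all add: rt_def)

lemma rv_rt: "rv (rt p q d) = (real p - real q) / real (Suc d)" by (simp add: rv_def)

lemma rf_rt [rf_intros]: "rf f \<Longrightarrow> rf g \<Longrightarrow> rf h \<Longrightarrow> rf (\<lambda>x. rt (f x) (g x) (h x))"
  unfolding rt_def by (intro rf_intros)

definition radd :: "nat \<Rightarrow> nat \<Rightarrow> nat" where
  "radd a b = rt (rN a * rD b + rN b * rD a) (rM a * rD b + rM b * rD a) (rD a * rD b - 1)"
definition rneg :: "nat \<Rightarrow> nat" where "rneg a = rt (rM a) (rN a) (rD a - 1)"
definition rsub :: "nat \<Rightarrow> nat \<Rightarrow> nat" where "rsub a b = radd a (rneg b)"
definition rmul :: "nat \<Rightarrow> nat \<Rightarrow> nat" where
  "rmul a b = rt (rN a * rN b + rM a * rM b) (rN a * rM b + rM a * rN b) (rD a * rD b - 1)"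
definition rle :: "nat \<Rightarrow> nat \<Rightarrow> bool" where
  "rle a b \<longleftrightarrow> rN a * rD b + rM b * rD a \<le> rN b * rD a + rM a * rD b"
definition rlt :: "nat \<Rightarrow> nat \<Rightarrow> bool" where
  "rlt a b \<longleftrightarrow> rN a * rD b + rM b * rD a < rN b * rD a + rM a * rD b"
definition rofn :: "nat \<Rightarrow> nat" where "rofn n = rt n 0 0"
definition rpow2 :: "nat \<Rightarrow> nat" where "rpow2 k = rt 1 0 (2 ^ k - 1)"
definition rdivn :: "nat \<Rightarrow> nat \<Rightarrow> nat" where "rdivn a k = rt (rN a) (rM a) (rD a * k - 1)"
definition rabs :: "nat \<Rightarrow> nat" where
  "rabs a = (if rM a \<le> rN a then rt (rN a - rM a) 0 (rD a - 1) else rt (rM a - rN a) 0 (rD a - 1))"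

lemma Suc_pred_mult: "Suc (Suc a * Suc b - 1) = Suc a * Suc b" by simp

lemma rv_radd [simp]: "rv (radd a b) = rv a + rv b"
  unfolding radd_def rv_rt unfolding rv_def
  by (simp only: Suc_pred_mult) (simp add: field_simps)

lemma rv_rneg [simp]: "rv (rneg a) = - rv a"
  unfolding rneg_def rv_rt rv_def by (simp add: field_simps)

lemma rv_rsub [simp]: "rv (rsub a b) = rv a - rv b"
  unfolding rsub_def by simp

lemma rv_rmul [simp]: "rv (rmul a b) = rv a * rv b"
  unfolding rmul_def rv_rt unfolding rv_def
  by (simp only: Suc_pred_mult) (simp add: field_simps)

lemma cross_le: "(real n1 - real m1) * real D2 \<le> (real n2 - real m2) * real D1 \<longleftrightarrow>
   real (n1 * D2 + m2 * D1) \<le> real (n2 * D1 + m1 * D2)"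
  by (simp add: algebra_simps)
lemma cross_less: "(real n1 - real m1) * real D2 < (real n2 - real m2) * real D1 \<longleftrightarrow>
   real (n1 * D2 + m2 * D1) < real (n2 * D1 + m1 * D2)"
  by (simp add: algebra_simps)

lemma rle_iff [simp]: "rle a b \<longleftrightarrow> rv a \<le> rv b"
proof -
  have "rv a \<le> rv b \<longleftrightarrow> (real (rN a) - real (rM a)) * real (rD b) \<le> (real (rN b) - real (rM b)) * real (rD a)"
    unfolding rv_def by (simp add: divide_le_eq le_divide_eq field_simps del: of_nat_Suc)
  also have "\<dots> \<longleftrightarrow> real (rN a * rD b + rM b * rD a) \<le> real (rN b * rD a + rM a * rD b)"
    by (rule cross_le)
  also have "\<dots> \<longleftrightarrow> rle a b" unfolding rle_def of_nat_le_iff ..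
  finally show ?thesis ..
qed

lemma rlt_iff [simp]: "rlt a b \<longleftrightarrow> rv a < rv b"
proof -
  have "rv a < rv b \<longleftrightarrow> (real (rN a) - real (rM a)) * real (rD b) < (real (rN b) - real (rM b)) * real (rD a)"
    unfolding rv_def by (simp add: divide_less_eq less_divide_eq field_simps del: of_nat_Suc)
  also have "\<dots> \<longleftrightarrow> real (rN a * rD b + rM b * rD a) < real (rN b * rD a + rM a * rD b)"
    by (rule cross_less)
  also have "\<dots> \<longleftrightarrow> rlt a b" unfolding rlt_def of_nat_less_iff ..
  finally show ?thesis ..
qed

lemma rv_rofn [simp]: "rv (rofn n) = real n" unfolding rofn_def rv_rt by simp

lemma rv_rpow2 [simp]: "rv (rpow2 k) = (1/2) ^ k"
proof -
  have "Suc (2 ^ k - 1) = 2 ^ k" by simp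
  then show ?thesis unfolding rpow2_def rv_rt by (simp add: power_one_over)
qed

lemma rv_rdivn [simp]: "k > 0 \<Longrightarrow> rv (rdivn a k) = rv a / real k"
  unfolding rdivn_def rv_rt unfolding rv_def
  by (cases k) (simp_all only: Suc_pred_mult, simp_all add: field_simps)

lemma rv_rabs [simp]: "rv (rabs a) = \<bar>rv a\<bar>"
  unfolding rabs_def rv_def by (auto simp: rv_rt of_nat_diff)

lemma rf_radd [rf_intros]: "rf f \<Longrightarrow> rf g \<Longrightarrow> rf (\<lambda>x. radd (f x) (g x))"
  unfolding radd_def by (intro rf_intros)
lemma rf_rneg [rf_intros]: "rf f \<Longrightarrow> rf (\<lambda>x. rneg (f x))"
  unfolding rneg_def by (intro rf_intros)
lemma rf_rsub [rf_intros]: "rf f \<Longrightarrow> rf g \<Longrightarrow> rf (\<lambda>x. rsub (f x) (g x))"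
  unfolding rsub_def by (intro rf_intros)
lemma rf_rmul [rf_intros]: "rf f \<Longrightarrow> rf g \<Longrightarrow> rf (\<lambda>x. rmul (f x) (g x))"
  unfolding rmul_def by (intro rf_intros)
lemma rp_rle [rf_intros]: "rf f \<Longrightarrow> rf g \<Longrightarrow> rp (\<lambda>x. rle (f x) (g x))"
  unfolding rle_def by (intro rf_intros)
lemma rp_rlt [rf_intros]: "rf f \<Longrightarrow> rf g \<Longrightarrow> rp (\<lambda>x. rlt (f x) (g x))"
  unfolding rlt_def by (intro rf_intros)
lemma rf_rofn [rf_intros]: "rf f \<Longrightarrow> rf (\<lambda>x. rofn (f x))"
  unfolding rofn_def by (intro rf_intros)
lemma rf_rpow2 [rf_intros]: "rf f \<Longrightarrow> rf (\<lambda>x. rpow2 (f x))"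
  unfolding rpow2_def by (intro rf_intros)
lemma rf_rdivn [rf_intros]: "rf f \<Longrightarrow> rf g \<Longrightarrow> rf (\<lambda>x. rdivn (f x) (g x))"
  unfolding rdivn_def by (intro rf_intros)
lemma rf_rabs [rf_intros]: "rf f \<Longrightarrow> rf (\<lambda>x. rabs (f x))"
  unfolding rabs_def by (intro rf_intros)

definition qtr :: "nat \<Rightarrow> nat" where
  "qtr k = (if psnd k = 0 then rt 0 0 0
            else if even (pfst k) then rt (pfst k div 2) 0 (psnd k - 1)
            else rt 0 (Suc (pfst k div 2)) (psnd k - 1))"

lemma rv_qtr: "rv (qtr k) = of_rat (rat_code k)"
proof -
  obtain a b where k: "prod_decode k = (a, b)" by (cases "prod_decode k")
  have rc: "rat_code k = Fract (int_decode a) (int b)" by (simp add: rat_code_def k)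
  have "of_rat (Fract (int_decode a) (int b)) = (real_of_int (int_decode a) / real b :: real)"
    by (simp add: Fract_of_int_quotient of_rat_divide)
  moreover have "rv (qtr k) = real_of_int (int_decode a) / real b"
  proof (cases "b = 0")
    case True then show ?thesis by (simp add: qtr_def k rv_rt)
  next
    case False
    then have b: "Suc (b - 1) = b" by simp
    show ?thesis
    proof (cases "even a")
      case True
      then have "int_decode a = int (a div 2)" by (simp add: int_decode_def sum_decode_def)
      then show ?thesis using True False by (simp add: qtr_def k rv_rt b)
    next
      case odd: False
      then have "int_decode a = - int (a div 2) - 1" by (simp add: int_decode_def sum_decode_def)
      then show ?thesis using odd False by (simp add: qtr_def k rv_rt b)
    qed
  qed
  ultimately show ?thesis using rc by simp
qed

lemma rf_qtr [rf_intros]: "rf f \<Longrightarrow> rf (\<lambda>x. qtr (f x))"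
proof -
  have e: "even n \<longleftrightarrow> n mod 2 = 0" for n :: nat by presburger
  show "rf f \<Longrightarrow> rf (\<lambda>x. qtr (f x))" unfolding qtr_def e by (intro rf_intros)
qed

definition vsq :: "nat \<Rightarrow> (nat \<Rightarrow> nat) \<Rightarrow> nat" where
  "vsq n F = rec_nat (rt 0 0 0) (\<lambda>i acc. radd acc (rmul (F i) (F i))) n"

lemma rv_vsq: "rv (vsq n F) = (\<Sum>i<n. (rv (F i))^2)"
  by (induction n) (simp_all add: vsq_def rv_rt power2_eq_square)

lemma rf_vsq [rf_intros]: "rf (\<lambda>z. F (pfst z) (psnd z)) \<Longrightarrow> rf n \<Longrightarrow> rf (\<lambda>x. vsq (n x) (F x))"
proof -
  assume F: "rf (\<lambda>z. F (pfst z) (psnd z))" and n: "rf n"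
  have F': "rf (\<lambda>z. F (pfst z) (pfst (psnd z)))"
    using rf_comp[OF F, of "\<lambda>z. prod_encode (pfst z, pfst (psnd z))"] by (simp add: rf_intros)
  show ?thesis unfolding vsq_def
    by (intro rf_rec_nat rf_const n rf_radd rf_rmul rf_psnd F' rf_id)
qed


section \<open>The algorithm\<close>

definition qc :: "nat \<Rightarrow> nat \<Rightarrow> nat" where "qc v i = qtr (nthd v i)"
definition gc :: "nat \<Rightarrow> nat \<Rightarrow> nat \<Rightarrow> nat \<Rightarrow> nat" where
  "gc t M g i = rt ((t div (2 * M + 1) ^ i) mod (2 * M + 1)) M (2 ^ g - 1)"
definition dqq :: "nat \<Rightarrow> nat \<Rightarrow> nat \<Rightarrow> nat" where
  "dqq N v w = vsq N (\<lambda>i. rsub (qc v i) (qc w i))"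
definition dgq :: "nat \<Rightarrow> nat \<Rightarrow> nat \<Rightarrow> nat \<Rightarrow> nat \<Rightarrow> nat" where
  "dgq N t M g w = vsq N (\<lambda>i. rsub (gc t M g i) (qc w i))"
definition bc :: "nat \<Rightarrow> nat" where "bc b = pfst b"
definition br :: "nat \<Rightarrow> nat" where "br b = rabs (qtr (psnd b))"
definition rzero :: nat where "rzero = rt 0 0 0"

definition fld :: "nat \<Rightarrow> nat \<Rightarrow> nat" where "fld t k = nthd t k"

definition need :: "nat \<Rightarrow> nat" where
  "need t = 4 * (fld t 2 + fld t 3 + fld t 5 + fld t 7) + 4"

definition chk_common :: "nat \<Rightarrow> (nat \<Rightarrow> nat) \<Rightarrow> nat \<Rightarrow> nat \<Rightarrow> nat \<Rightarrow> bool" where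
  "chk_common N P m st t \<longleftrightarrow>
     P (4 * fld t 2 + 3) = Suc (fld t 1) \<and>
     rlt rzero (br (fld t 1)) \<and> rle (br (fld t 1)) (rpow2 m) \<and>
     (st = 1 \<or> (2 \<le> st \<and> rle (br (fld t 1)) (br (st - 2)) \<and>
        rle (dqq N (bc (fld t 1)) (bc (st - 2)))
            (rmul (rsub (br (st - 2)) (br (fld t 1))) (rsub (br (st - 2)) (br (fld t 1))))))"

definition chk_C1 :: "nat \<Rightarrow> nat \<Rightarrow> (nat \<Rightarrow> nat) \<Rightarrow> nat \<Rightarrow> bool" where
  "chk_C1 N Q P t \<longleftrightarrow>
     rlt rzero (fld t 4) \<and>
     rle rzero (rsub (rsub (rmul (radd (rofn 1) (rdivn (rofn 1) Q)) (fld t 4)) (rpow2 (fld t 3))) (br (fld t 1))) \<and>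
     rle (dqq N (P (2 * fld t 3)) (bc (fld t 1)))
         (rmul (rsub (rsub (rmul (radd (rofn 1) (rdivn (rofn 1) Q)) (fld t 4)) (rpow2 (fld t 3))) (br (fld t 1)))
               (rsub (rsub (rmul (radd (rofn 1) (rdivn (rofn 1) Q)) (fld t 4)) (rpow2 (fld t 3))) (br (fld t 1)))) \<and>
     rle rzero (rsub (rsub (rmul (rofn (fld t 6)) (rpow2 (fld t 5))) (radd (fld t 4) (rpow2 (fld t 3)))) (rmul (rofn N) (rpow2 (fld t 5)))) \<and>
     rle (dqq N (P (2 * fld t 3)) 0)
         (rmul (rsub (rsub (rmul (rofn (fld t 6)) (rpow2 (fld t 5))) (radd (fld t 4) (rpow2 (fld t 3)))) (rmul (rofn N) (rpow2 (fld t 5))))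
               (rsub (rsub (rmul (rofn (fld t 6)) (rpow2 (fld t 5))) (radd (fld t 4) (rpow2 (fld t 3)))) (rmul (rofn N) (rpow2 (fld t 5))))) \<and>
     (\<forall>u < (2 * fld t 6 + 1) ^ N.
        rle (dgq N u (fld t 6) (fld t 5) (P (2 * fld t 3)))
            (rmul (radd (radd (fld t 4) (rpow2 (fld t 3))) (rmul (rofn N) (rpow2 (fld t 5))))
                  (radd (radd (fld t 4) (rpow2 (fld t 3))) (rmul (rofn N) (rpow2 (fld t 5))))) \<longrightarrow>
        (\<exists>j < fld t 7. P (4 * j + 1) \<noteq> 0 \<and>
           rlt (rmul (rofn N) (rpow2 (fld t 5))) (br (P (4 * j + 1) - 1)) \<and>
           rlt (dgq N u (fld t 6) (fld t 5) (bc (P (4 * j + 1) - 1)))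
               (rmul (rsub (br (P (4 * j + 1) - 1)) (rmul (rofn N) (rpow2 (fld t 5))))
                     (rsub (br (P (4 * j + 1) - 1)) (rmul (rofn N) (rpow2 (fld t 5)))))))"

definition chk_C2 :: "nat \<Rightarrow> nat \<Rightarrow> (nat \<Rightarrow> nat) \<Rightarrow> nat \<Rightarrow> bool" where
  "chk_C2 N Q P t \<longleftrightarrow>
     rlt rzero (rsub (rdivn (br (fld t 1)) 2) (rpow2 (fld t 3))) \<and>
     rlt (dqq N (P (2 * fld t 3)) (bc (fld t 1)))
         (rmul (rsub (rdivn (br (fld t 1)) 2) (rpow2 (fld t 3))) (rsub (rdivn (br (fld t 1)) 2) (rpow2 (fld t 3)))) \<and>
     P (4 * fld t 5 + 3) = Suc (fld t 4) \<and>
     rle rzero (rsub (rsub (rdivn (rmul (br (fld t 1)) (rofn Q)) (2 * (Q + 1))) (rpow2 (fld t 3))) (br (fld t 4))) \<and>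
     rle (dqq N (P (2 * fld t 3)) (bc (fld t 4)))
         (rmul (rsub (rsub (rdivn (rmul (br (fld t 1)) (rofn Q)) (2 * (Q + 1))) (rpow2 (fld t 3))) (br (fld t 4)))
               (rsub (rsub (rdivn (rmul (br (fld t 1)) (rofn Q)) (2 * (Q + 1))) (rpow2 (fld t 3))) (br (fld t 4))))"

definition chk :: "nat \<Rightarrow> nat \<Rightarrow> (nat \<Rightarrow> nat) \<Rightarrow> nat \<Rightarrow> nat \<Rightarrow> nat \<Rightarrow> bool" where
  "chk N Q P m st t \<longleftrightarrow> chk_common N P m st t \<and> (if fld t 0 = 0 then chk_C1 N Q P t else chk_C2 N Q P t)"

definition srch :: "nat \<Rightarrow> nat \<Rightarrow> (nat \<Rightarrow> nat) \<Rightarrow> nat \<Rightarrow> nat \<Rightarrow> nat \<Rightarrow> nat" where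
  "srch N Q P k m st = rec_nat 0 (\<lambda>t acc. if acc \<noteq> 0 then acc else if k < need t then 1
      else if chk N Q P m st t then Suc (Suc (fld t 1)) else 0) k"

definition run :: "nat \<Rightarrow> nat \<Rightarrow> (nat \<Rightarrow> nat) \<Rightarrow> nat \<Rightarrow> nat \<Rightarrow> nat" where
  "run N Q P k n = rec_nat 1 (\<lambda>m st. if st = 0 then 0 else if 2 \<le> srch N Q P k m st then srch N Q P k m st else 0) n"

definition hfun :: "nat \<Rightarrow> nat \<Rightarrow> nat \<Rightarrow> nat" where
  "hfun N Q w = (if 2 \<le> run N Q (nthd (psnd w)) (lenc (psnd w)) (Suc (pfst w))
                then Suc (bc (run N Q (nthd (psnd w)) (lenc (psnd w)) (Suc (pfst w)) - 2)) else 0)"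

lemma rp_if [rf_intros]: "rp C \<Longrightarrow> rp P \<Longrightarrow> rp R \<Longrightarrow> rp (\<lambda>x. if C x then P x else R x)"
proof -
  assume "rp C" "rp P" "rp R"
  then have "rp (\<lambda>x. (C x \<longrightarrow> P x) \<and> (\<not> C x \<longrightarrow> R x))" by (intro rf_intros)
  then show ?thesis by (rule back_subst[of rp]) auto
qed

lemma rf_qc [rf_intros]:
  assumes "rf f" and "rf g"
  shows "rf (\<lambda>x. qc (f x) (g x))"
  unfolding qc_def by (intro rf_intros assms rf_comp[OF assms(1)] rf_comp[OF assms(2)])
lemma rf_gc [rf_intros]:
  assumes "rf f" and "rf g" and "rf h" and "rf k"
  shows "rf (\<lambda>x. gc (f x) (g x) (h x) (k x))"
  unfolding gc_def by (intro rf_intros assms rf_comp[OF assms(1)] rf_comp[OF assms(2)] rf_comp[OF assms(3)] rf_comp[OF assms(4)])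
lemma rf_dqq [rf_intros]:
  assumes "rf f" and "rf g"
  shows "rf (\<lambda>x. dqq N (f x) (g x))"
  unfolding dqq_def by (intro rf_intros assms rf_comp[OF assms(1)] rf_comp[OF assms(2)])
lemma rf_dgq [rf_intros]:
  assumes "rf f" and "rf g" and "rf h" and "rf k"
  shows "rf (\<lambda>x. dgq N (f x) (g x) (h x) (k x))"
  unfolding dgq_def by (intro rf_intros assms rf_comp[OF assms(1)] rf_comp[OF assms(2)] rf_comp[OF assms(3)] rf_comp[OF assms(4)])
lemma rf_bc [rf_intros]:
  assumes "rf f"
  shows "rf (\<lambda>x. bc (f x))" unfolding bc_def by (intro rf_intros assms)
lemma rf_br [rf_intros]:
  assumes "rf f"
  shows "rf (\<lambda>x. br (f x))" unfolding br_def by (intro rf_intros assms)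
lemma rf_rzero [rf_intros]: "rf (\<lambda>x. rzero)" by (rule rf_const)
lemma rf_fld [rf_intros]:
  assumes "rf f"
  shows "rf (\<lambda>x. fld (f x) k)" unfolding fld_def by (intro rf_intros assms)
lemma rf_need [rf_intros]:
  assumes "rf f"
  shows "rf (\<lambda>x. need (f x))" unfolding need_def by (intro rf_intros assms)

lemma rp_chk [rf_intros]:
  assumes "rf l" and "rf m" and "rf st" and "rf t"
  shows "rp (\<lambda>x. chk N Q (nthd (l x)) (m x) (st x) (t x))"
  unfolding chk_def chk_common_def chk_C1_def chk_C2_def by (intro rf_intros assms rf_comp[OF assms(1)] rf_comp[OF assms(2)] rf_comp[OF assms(3)] rf_comp[OF assms(4)])

lemma rf_srch [rf_intros]:
  assumes "rf l" and "rf k" and "rf m" and "rf st"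
  shows "rf (\<lambda>x. srch N Q (nthd (l x)) (k x) (m x) (st x))"
  unfolding srch_def by (intro rf_intros assms rf_comp[OF assms(1)] rf_comp[OF assms(2)] rf_comp[OF assms(3)] rf_comp[OF assms(4)])

lemma rf_run [rf_intros]:
  assumes "rf l" and "rf k" and "rf n"
  shows "rf (\<lambda>x. run N Q (nthd (l x)) (k x) (n x))"
  unfolding run_def by (intro rf_intros assms rf_comp[OF assms(1)] rf_comp[OF assms(2)] rf_comp[OF assms(3)])

lemma rf_hfun: "rf (hfun N Q)"
  unfolding hfun_def by (intro rf_intros)


lemma coord_idx_bij: "bij_betw (coord_idx :: 'n::finite \<Rightarrow> nat) UNIV {..<CARD('n)}"
proof -
  have "\<exists>f. bij_betw f (UNIV :: 'n set) {..<CARD('n)}"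
    using ex_bij_betw_finite_nat[of "UNIV :: 'n set"] by (simp add: atLeast0LessThan)
  then show ?thesis unfolding coord_idx_def by (rule someI_ex)
qed

lemma coord_idx_lt: "coord_idx (j :: 'n::finite) < CARD('n)"
  using coord_idx_bij[where 'n='n] by (auto simp: bij_betw_def)

lemma coord_idx_inj: "coord_idx (j :: 'n::finite) = coord_idx k \<longleftrightarrow> j = k"
  using coord_idx_bij[where 'n='n] by (auto simp: bij_betw_def inj_on_def)

lemma sum_coord: "(\<Sum>j\<in>(UNIV :: 'n::finite set). f (coord_idx j)) = (\<Sum>i<CARD('n). f i)"
  using sum.reindex_bij_betw[OF coord_idx_bij[where 'n='n], of f] by simp

lemma qvec_nth: "(qvec v :: real ^ 'n::finite) $ j = rv (qc v (coord_idx j))"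
  unfolding qvec_def qc_def rv_qtr nthd_decode by (simp add: Let_def)

lemma dist_sq: "dist (u :: real ^ 'n::finite) w ^ 2 = (\<Sum>j\<in>UNIV. (u $ j - w $ j)^2)"
  unfolding dist_vec_def L2_set_def by (simp add: sum_nonneg dist_real_def)

lemma rv_dqq: "rv (dqq CARD('n::finite) v w) = dist (qvec v :: real ^ 'n) (qvec w) ^ 2"
  unfolding dist_sq dqq_def rv_vsq qvec_nth
  using sum_coord[of "\<lambda>i. (rv (qc v i) - rv (qc w i))^2", where 'n='n] by simp

definition gvec :: "nat \<Rightarrow> nat \<Rightarrow> nat \<Rightarrow> real ^ 'n::finite" where
  "gvec u M g = (\<chi> j. rv (gc u M g (coord_idx j)))"

lemma rv_dgq: "rv (dgq CARD('n::finite) u M g w) = dist (gvec u M g :: real ^ 'n) (qvec w) ^ 2"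
  unfolding dist_sq dgq_def rv_vsq qvec_nth gvec_def
  using sum_coord[of "\<lambda>i. (rv (gc u M g i) - rv (qc w i))^2", where 'n='n] by simp

lemma rv_gc: "rv (gc u M g i) = (real ((u div (2 * M + 1) ^ i) mod (2 * M + 1)) - real M) / 2 ^ g"
proof -
  have "real (Suc (2 ^ g - 1)) = 2 ^ g" by simp
  then show ?thesis unfolding gc_def rv_rt by simp
qed

lemma basic_ball_eq: "basic_ball b = ball (qvec (bc b)) (rv (br b))"
  unfolding basic_ball_def bc_def br_def rv_rabs rv_qtr by (simp split: prod.split)

lemma rv_br_nonneg: "0 \<le> rv (br b)" unfolding br_def by simp

lemma qvec_0: "qvec 0 = (0 :: real ^ 'n::finite)"
  unfolding qvec_def by (simp add: vec_eq_iff rat_code_def Fract_of_int_quotient)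

lemma rv_rzero [simp]: "rv rzero = 0" unfolding rzero_def by (simp add: rv_rt)

lemma fld_list [simp]: "k < length xs \<Longrightarrow> fld (list_encode xs) k = xs ! k"
  unfolding fld_def by (simp add: nthd_encode)

lemma rat_code_surj: "\<exists>k. rat_code k = r"
proof -
  obtain a b where q: "quotient_of r = (a, b)" by (cases "quotient_of r")
  then have b: "b > 0" using quotient_of_denom_pos by blast
  have "rat_code (prod_encode (int_encode a, nat b)) = Fract a b"
    using b by (simp add: rat_code_def)
  also have "\<dots> = r" using quotient_of_div[OF q] by (simp add: Fract_of_int_quotient)
  finally show ?thesis by blast
qed

lemma qvec_surj: "\<exists>v. \<forall>j. (qvec v :: real ^ 'n::finite) $ j = of_rat (g (coord_idx j))"
proof -
  obtain e where e: "\<And>r. rat_code (e r) = r" using rat_code_surj by metis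
  let ?l = "map (\<lambda>i. e (g i)) [0..<CARD('n)]"
  have "(qvec (list_encode ?l) :: real ^ 'n) $ j = of_rat (g (coord_idx j))" for j
    using coord_idx_lt[of j] by (simp add: qvec_def Let_def e)
  then show ?thesis by blast
qed

lemma ball_code_ex: "\<exists>b. bc b = v \<and> rv (br b) = of_rat r" if "r \<ge> 0"
proof -
  obtain k where "rat_code k = r" using rat_code_surj by blast
  then show ?thesis using that
    by (intro exI[of _ "prod_encode (v, k)"]) (simp add: bc_def br_def rv_qtr zero_le_of_rat_iff)
qed

lemma dist_le_sum_abs: "dist (u :: real ^ 'n::finite) w \<le> (\<Sum>j\<in>UNIV. \<bar>u $ j - w $ j\<bar>)"
  unfolding dist_vec_def using L2_set_le_sum_abs[of "\<lambda>j. dist (u $ j) (w $ j)" UNIV]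
  by (simp add: dist_real_def)

lemma qvec_dense: "\<exists>v. dist (qvec v :: real ^ 'n::finite) y < \<delta>" if "\<delta> > 0"
proof -
  define D where "D = \<delta> / real CARD('n)"
  have D: "D > 0" using that by (simp add: D_def)
  have "\<forall>j. \<exists>q. \<bar>of_rat q - y $ j\<bar> < D"
  proof
    fix j
    obtain r where "r \<in> \<rat>" "y $ j < r" "r < y $ j + D" using Rats_dense_in_real[of "y $ j" "y $ j + D"] D by auto
    then show "\<exists>q. \<bar>of_rat q - y $ j\<bar> < D" by (metis Rats_cases abs_of_pos add.commute diff_less_eq diff_gt_0_iff_gt)
  qed
  then obtain G where G: "\<And>j. \<bar>of_rat (G j) - y $ j\<bar> < D" by metis
  obtain v where v: "\<And>j. (qvec v :: real ^ 'n) $ j = of_rat ((G \<circ> inv coord_idx) (coord_idx j))"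
    using qvec_surj by blast
  have inv: "inv coord_idx (coord_idx j) = (j :: 'n)" for j
    by (rule inv_f_f) (simp add: inj_def coord_idx_inj)
  have "dist (qvec v :: real ^ 'n) y \<le> (\<Sum>j\<in>UNIV. \<bar>(qvec v :: real ^ 'n) $ j - y $ j\<bar>)" by (rule dist_le_sum_abs)
  also have "\<dots> < (\<Sum>j\<in>(UNIV :: 'n set). D)"
    by (rule sum_strict_mono) (use G v inv in auto)
  also have "\<dots> = \<delta>" by (simp add: D_def)
  finally show ?thesis by blast
qed


section \<open>Locality and consistency of the search\<close>

lemma nthd_prefix: "nthd (prefix_code P k) j = (if j < k then P j else 0)"
  unfolding prefix_code_def nthd_encode by simp

lemma lenc_prefix: "lenc (prefix_code P k) = k"
  unfolding prefix_code_def lenc_encode by simp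

lemma chk_local:
  assumes "\<forall>j < need t. P' j = P j"
  shows "chk N Q P' m st t = chk N Q P m st t"
proof -
  have a: "P' (4 * fld t 2 + 3) = P (4 * fld t 2 + 3)" "P' (2 * fld t 3) = P (2 * fld t 3)"
    "P' (4 * fld t 5 + 3) = P (4 * fld t 5 + 3)"
    using assms by (auto simp: need_def)
  have b: "j < fld t 7 \<Longrightarrow> P' (4 * j + 1) = P (4 * j + 1)" for j
    using assms by (auto simp: need_def)
  show ?thesis unfolding chk_def chk_common_def chk_C1_def chk_C2_def a
    using b by (simp cong: conj_cong)
qed

lemma chk_prefix: "need t \<le> k \<Longrightarrow> chk N Q (nthd (prefix_code P k)) m st t = chk N Q P m st t"
  by (rule chk_local) (simp add: nthd_prefix)

context
  fixes c :: "nat \<Rightarrow> bool" and k :: nat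
begin

definition S :: "nat \<Rightarrow> nat" where
  "S T = rec_nat 0 (\<lambda>t acc. if acc \<noteq> 0 then acc else if k < need t then 1
      else if c t then Suc (Suc (fld t 1)) else 0) T"

lemma S_zero: "S T = 0 \<longleftrightarrow> (\<forall>t<T. need t \<le> k \<and> \<not> c t)"
  by (induction T) (auto simp: S_def less_Suc_eq not_less)

lemma S_ge2: "2 \<le> S T \<Longrightarrow> \<exists>t<T. S T = Suc (Suc (fld t 1)) \<and> need t \<le> k \<and> c t \<and> (\<forall>t'<t. need t' \<le> k \<and> \<not> c t')"
proof (induction T)
  case 0 then show ?case by (simp add: S_def)
next
  case (Suc T)
  show ?case
  proof (cases "S T = 0")
    case True
    then have z: "\<forall>t<T. need t \<le> k \<and> \<not> c t" using S_zero by blast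
    have "S (Suc T) = (if k < need T then 1 else if c T then Suc (Suc (fld T 1)) else 0)"
      using True by (simp add: S_def)
    then show ?thesis using Suc.prems z by (auto split: if_splits)
  next
    case False
    then have "S (Suc T) = S T" by (simp add: S_def)
    then show ?thesis using Suc by (metis less_Suc_eq)
  qed
qed

lemma S_found: "t < T \<Longrightarrow> need t \<le> k \<Longrightarrow> c t \<Longrightarrow> (\<forall>t'<t. need t' \<le> k \<and> \<not> c t') \<Longrightarrow> S T = Suc (Suc (fld t 1))"
proof (induction T)
  case 0 then show ?case by simp
next
  case (Suc T)
  show ?case
  proof (cases "t < T")
    case True
    then have "S T = Suc (Suc (fld t 1))" using Suc by blast
    then show ?thesis by (simp add: S_def)
  next
    case False
    then have "t = T" using Suc by simp
    then have "S T = 0" using Suc.prems S_zero by blast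
    then show ?thesis using Suc.prems \<open>t = T\<close> by (simp add: S_def)
  qed
qed

end

lemma srch_S: "srch N Q P' k m st = S (chk N Q P' m st) k k"
  unfolding srch_def S_def ..

context
  fixes N Q :: nat and P :: "nat \<Rightarrow> nat"
begin

fun cst :: "nat \<Rightarrow> nat" where
  "cst 0 = 1"
| "cst (Suc m) = Suc (Suc (fld (LEAST t. chk N Q P m (cst m) t) 1))"

lemma cst_ge: "cst m \<ge> 1" by (cases m) auto

lemma run_Suc: "run N Q P' k (Suc n) = (let st = run N Q P' k n in
   if st = 0 then 0 else if 2 \<le> srch N Q P' k n st then srch N Q P' k n st else 0)"
  by (simp add: run_def Let_def)

lemma run_consistent: "run N Q (nthd (prefix_code P k)) k n = 0 \<or> run N Q (nthd (prefix_code P k)) k n = cst n"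
proof (induction n)
  case 0 then show ?case by (simp add: run_def)
next
  case (Suc n)
  let ?P' = "nthd (prefix_code P k)"
  show ?case
  proof (cases "run N Q ?P' k n = 0")
    case True then show ?thesis by (simp add: run_Suc)
  next
    case False
    then have st: "run N Q ?P' k n = cst n" using Suc.IH by auto
    show ?thesis
    proof (cases "2 \<le> srch N Q ?P' k n (cst n)")
      case True
      then obtain t where t: "srch N Q ?P' k n (cst n) = Suc (Suc (fld t 1))" "need t \<le> k"
        "chk N Q ?P' n (cst n) t" "\<forall>t'<t. need t' \<le> k \<and> \<not> chk N Q ?P' n (cst n) t'"
        using S_ge2[of "chk N Q ?P' n (cst n)" k k] unfolding srch_S by blast
      have c: "chk N Q P n (cst n) t" using t(2,3) chk_prefix by metis
      have nc: "\<forall>t'<t. \<not> chk N Q P n (cst n) t'" using t(4) chk_prefix by metis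
      have "(LEAST t. chk N Q P n (cst n) t) = t"
        using c nc by (metis LeastI_ex not_less_Least linorder_neqE_nat)
      then show ?thesis using st t(1) True cst_ge[of n] by (simp add: run_Suc Let_def)
    next
      case False then show ?thesis using st by (simp add: run_Suc Let_def)
    qed
  qed
qed

lemma run_eventually:
  assumes ex: "\<forall>m<n. \<exists>t. chk N Q P m (cst m) t"
  shows "\<exists>K. \<forall>k\<ge>K. run N Q (nthd (prefix_code P k)) k n = cst n"
  using ex
proof (induction n)
  case 0 then show ?case by (simp add: run_def)
next
  case (Suc n)
  then obtain K0 where K0: "\<forall>k\<ge>K0. run N Q (nthd (prefix_code P k)) k n = cst n" by auto
  let ?c = "chk N Q P n (cst n)"
  obtain t0 where "?c t0" using Suc.prems by auto
  define t where "t = (LEAST t. ?c t)"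
  have ct: "?c t" unfolding t_def using \<open>?c t0\<close> by (rule LeastI)
  have nct: "\<forall>t'<t. \<not> ?c t'" unfolding t_def using not_less_Least by blast
  define K where "K = K0 + Suc t + (\<Sum>t'\<le>t. need t')"
  have "run N Q (nthd (prefix_code P k)) k (Suc n) = cst (Suc n)" if k: "k \<ge> K" for k
  proof -
    let ?P' = "nthd (prefix_code P k)"
    have st: "run N Q ?P' k n = cst n" using K0 k by (simp add: K_def)
    have needs: "need t' \<le> k" if "t' \<le> t" for t'
    proof -
      have "need t' \<le> (\<Sum>t'\<le>t. need t')" using that by (intro member_le_sum) auto
      then show ?thesis using k by (simp add: K_def)
    qed
    have "srch N Q ?P' k n (cst n) = Suc (Suc (fld t 1))"
      unfolding srch_S
    proof (rule S_found)
      show "t < k" using k by (simp add: K_def)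
      show "need t \<le> k" using needs by simp
      show "chk N Q ?P' n (cst n) t" using ct needs chk_prefix by (metis order_refl)
      show "\<forall>t'<t. need t' \<le> k \<and> \<not> chk N Q ?P' n (cst n) t'"
        using nct needs chk_prefix by (metis less_imp_le)
    qed
    then show ?thesis using st cst_ge[of n] by (simp add: run_Suc t_def)
  qed
  then show ?case by blast
qed

lemma computes_hfun:
  assumes ex: "\<forall>m. \<exists>t. chk N Q P m (cst m) t"
  shows "computes_on (hfun N Q) P (\<lambda>n. bc (cst (Suc n) - 2))"
  unfolding computes_on_def
proof (rule allI, rule conjI)
  fix n
  have h: "hfun N Q (prod_encode (n, prefix_code P k)) =
    (if 2 \<le> run N Q (nthd (prefix_code P k)) k (Suc n)
     then Suc (bc (run N Q (nthd (prefix_code P k)) k (Suc n) - 2)) else 0)" for k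
    unfolding hfun_def by (simp add: lenc_prefix)
  obtain K where K: "\<forall>k\<ge>K. run N Q (nthd (prefix_code P k)) k (Suc n) = cst (Suc n)"
    using run_eventually[of "Suc n"] ex by blast
  show "\<exists>k. hfun N Q (prod_encode (n, prefix_code P k)) = Suc (bc (cst (Suc n) - 2))"
    using K h[of K] by (intro exI[of _ K]) simp
  show "\<forall>k. hfun N Q (prod_encode (n, prefix_code P k)) \<in> {0, Suc (bc (cst (Suc n) - 2))}"
  proof
    fix k show "hfun N Q (prod_encode (n, prefix_code P k)) \<in> {0, Suc (bc (cst (Suc n) - 2))}"
      using run_consistent[of k "Suc n"] h[of k] by (auto simp del: cst.simps)
  qed
qed

end


lemma half_pow_lt: "\<epsilon> > 0 \<Longrightarrow> \<exists>e. (1/2::real) ^ e < \<epsilon>"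
  using real_arch_pow_inv[of \<epsilon> "1/2"] by simp

lemma dyadic_between:
  fixes lo hi :: real
  assumes "0 \<le> lo" "lo < hi"
  shows "\<exists>p e. lo < real p / 2 ^ e \<and> real p / 2 ^ e < hi"
proof -
  obtain e where e: "(1/2::real) ^ e < hi - lo" using half_pow_lt[of "hi - lo"] assms by auto
  define p where "p = nat \<lfloor>lo * 2 ^ e\<rfloor> + 1"
  have f0: "0 \<le> \<lfloor>lo * 2 ^ e\<rfloor>" using assms by simp
  have p: "real p = of_int \<lfloor>lo * 2 ^ e\<rfloor> + 1" using f0 by (simp add: p_def)
  have "lo * 2 ^ e < real p" using p by linarith
  then have 1: "lo < real p / 2 ^ e" by (simp add: field_simps)
  have "real p \<le> lo * 2 ^ e + 1" using p by linarith
  then have "real p / 2 ^ e \<le> lo + (1/2) ^ e" by (simp add: field_simps)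
  then show ?thesis using 1 e by (intro exI[of _ p] exI[of _ e]) auto
qed

lemma rv_dyadic: "rv (rt p 0 (2 ^ e - 1)) = real p / 2 ^ e"
proof -
  have "real (Suc (2 ^ e - 1)) = 2 ^ e" by simp
  then show ?thesis by (simp add: rv_rt)
qed

lemma digits:
  fixes B :: nat and dd :: "nat \<Rightarrow> nat"
  assumes B: "B > 0" and d: "\<forall>k<n. dd k < B"
  shows "(\<Sum>k<n. dd k * B ^ k) < B ^ n \<and> (\<forall>k<n. ((\<Sum>k<n. dd k * B ^ k) div B ^ k) mod B = dd k)"
  using d
proof (induction n)
  case 0 then show ?case by simp
next
  case (Suc n)
  let ?u = "\<Sum>k<n. dd k * B ^ k"
  have IH: "?u < B ^ n" "\<forall>k<n. (?u div B ^ k) mod B = dd k" using Suc by auto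
  have dn: "dd n < B" using Suc.prems by auto
  have u': "(\<Sum>k<Suc n. dd k * B ^ k) = ?u + dd n * B ^ n" by simp
  have lt: "?u + dd n * B ^ n < B ^ Suc n"
  proof -
    have "?u + dd n * B ^ n < B ^ n + dd n * B ^ n" using IH by simp
    also have "\<dots> = (dd n + 1) * B ^ n" by simp
    also have "\<dots> \<le> B * B ^ n" using dn by (intro mult_right_mono) auto
    finally show ?thesis by simp
  qed
  have dig: "((?u + dd n * B ^ n) div B ^ k) mod B = dd k" if k: "k < Suc n" for k
  proof (cases "k = n")
    case True
    have "(?u + dd n * B ^ n) div B ^ n = dd n" using IH(1) B
      by (simp add: div_add1_eq[of ?u] div_less)
    then show ?thesis using True dn by simp
  next
    case False
    then have kn: "k < n" using k by simp
    then obtain l where l: "n = k + Suc l" by (metis add_Suc_right less_iff_Suc_add add.commute)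
    have eq: "?u + dd n * B ^ n = ?u + (dd n * B ^ Suc l) * B ^ k" using l by (simp add: power_add)
    have "(?u + (dd n * B ^ Suc l) * B ^ k) div B ^ k = dd n * B ^ Suc l + ?u div B ^ k"
      using B by (intro div_mult_self1) simp
    then have "(?u + dd n * B ^ n) div B ^ k = ?u div B ^ k + dd n * B ^ Suc l"
      by (subst eq) simp
    then have "((?u + dd n * B ^ n) div B ^ k) mod B = (?u div B ^ k) mod B"
      by (simp add: mod_add_eq[symmetric] power_Suc)
    then show ?thesis using IH(2) kn by simp
  qed
  show ?case using u' lt dig by simp
qed

lemma gvec_digits:
  fixes z :: "'n::finite \<Rightarrow> int" and M g :: nat
  assumes z: "\<forall>j. \<bar>z j\<bar> \<le> int M"
  shows "\<exists>u < (2 * M + 1) ^ CARD('n). (gvec u M g :: real ^ 'n) = (\<chi> j. of_int (z j) / 2 ^ g)"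
proof -
  define B where "B = 2 * M + 1"
  define dd where "dd k = nat (z (inv coord_idx k) + int M)" for k
  have inv: "inv coord_idx (coord_idx j) = (j :: 'n)" for j
    by (rule inv_f_f) (simp add: inj_def coord_idx_inj)
  have dd: "\<forall>k<CARD('n). dd k < B"
  proof (intro allI impI)
    fix k
    have "z (inv coord_idx k) \<le> int M" using z abs_le_iff by blast
    then show "dd k < B" unfolding dd_def B_def by arith
  qed
  define u where "u = (\<Sum>k<CARD('n). dd k * B ^ k)"
  have u: "u < B ^ CARD('n)" "\<forall>k<CARD('n). (u div B ^ k) mod B = dd k"
    using digits[of B "CARD('n)" dd] dd by (auto simp: B_def u_def)
  have "(gvec u M g :: real ^ 'n) $ j = of_int (z j) / 2 ^ g" for j
  proof -
    have "(u div B ^ coord_idx j) mod B = dd (coord_idx j)" using u coord_idx_lt by blast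
    moreover have "real (dd (coord_idx j)) = of_int (z j) + real M"
      using z[rule_format, of j] by (simp add: dd_def inv)
    ultimately show ?thesis unfolding gvec_def rv_gc by (simp add: B_def)
  qed
  then show ?thesis using u by (intro exI[of _ u]) (auto simp: B_def vec_eq_iff)
qed

lemma near_grid:
  fixes p :: "real ^ 'n::finite" and h :: real
  assumes h: "h > 0"
  shows "\<exists>z. dist p (\<chi> j. of_int (z j) * h) \<le> real CARD('n) * h \<and> (\<forall>j. \<bar>of_int (z j) * h - p $ j\<bar> \<le> h / 2)"
proof -
  define z where "z j = \<lfloor>p $ j / h + 1/2\<rfloor>" for j
  have zj: "\<bar>of_int (z j) * h - p $ j\<bar> \<le> h / 2" for j
  proof -
    have "of_int (z j) \<le> p $ j / h + 1/2" "p $ j / h + 1/2 < of_int (z j) + 1" unfolding z_def by linarith+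
    then have "of_int (z j) * h \<le> p $ j + h/2" "p $ j + h/2 < of_int (z j) * h + h"
      using h by (simp_all add: field_simps)
    then show ?thesis unfolding abs_le_iff by linarith
  qed
  have "dist p (\<chi> j. of_int (z j) * h) \<le> (\<Sum>j\<in>UNIV. \<bar>p $ j - (\<chi> j. of_int (z j) * h) $ j\<bar>)"
    by (rule dist_le_sum_abs)
  also have "\<dots> \<le> (\<Sum>j\<in>(UNIV :: 'n set). h)"
  proof (intro sum_mono)
    fix j
    have "\<bar>p $ j - of_int (z j) * h\<bar> \<le> h / 2" using zj[of j] by (simp add: abs_minus_commute)
    then show "\<bar>p $ j - (\<chi> j. of_int (z j) * h) $ j\<bar> \<le> h" using h by simp
  qed
  also have "\<dots> = real CARD('n) * h" by simp
  finally show ?thesis using zj by blast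
qed


section \<open>Semantics of the checks\<close>

lemma rv_onepE: "Q > 0 \<Longrightarrow> rv (radd (rofn 1) (rdivn (rofn 1) Q)) = 1 + 1 / real Q"
  by simp

lemma sq_le_imp: "(a::real)\<^sup>2 \<le> b\<^sup>2 \<Longrightarrow> 0 \<le> b \<Longrightarrow> a \<le> b" by (rule power2_le_imp_le)
lemma sq_less_imp: "(a::real)\<^sup>2 < b\<^sup>2 \<Longrightarrow> 0 \<le> b \<Longrightarrow> a < b" by (rule power2_less_imp_less)

locale setting =
  fixes P :: "nat \<Rightarrow> nat" and x :: "real ^ 'n::finite" and A :: "(real ^ 'n) set" and Q :: nat
  assumes cx: "cauchy_rep (\<lambda>i. P (2 * i)) x"
    and cA: "closed_rep (\<lambda>i. P (2 * i + 1)) A"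
    and ne: "A \<noteq> {}"
    and Qpos: "Q > 0"
begin

definition xs :: "nat \<Rightarrow> real ^ 'n" where "xs i = qvec (P (2 * i))"

abbreviation D :: real where "D \<equiv> infdist x A"
abbreviation E :: real where "E \<equiv> 1 / real Q"

lemma xs_close: "dist (xs i) x \<le> (1/2) ^ i"
proof -
  have c: "\<forall>i j. i \<le> j \<longrightarrow> dist (xs i) (xs j) \<le> (1/2) ^ i" and l: "xs \<longlonglongrightarrow> x"
    using cx unfolding cauchy_rep_def xs_def by auto
  have "(\<lambda>j. dist (xs i) (xs j)) \<longlonglongrightarrow> dist (xs i) x" by (intro tendsto_intros l)
  then show ?thesis by (rule LIMSEQ_le_const2) (use c in auto)
qed

lemma A_closed: "closed A" using cA unfolding closed_rep_def by auto

lemma neg_eq: "(\<Union>k \<in> enumerated (\<lambda>j. P (4 * j + 1)). basic_ball k) = - A"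
proof -
  have "(\<lambda>i. P (2 * (2 * i) + 1)) = (\<lambda>j. P (4 * j + 1))" by (simp add: mult.assoc)
  then show ?thesis using cA unfolding closed_rep_def by simp
qed

lemma pos_eq: "enumerated (\<lambda>j. P (4 * j + 3)) = {k. basic_ball k \<inter> A \<noteq> {}}"
proof -
  have "2 * (2 * i + 1) + 1 = 4 * i + 3" for i :: nat by simp
  then have "(\<lambda>i. P (2 * (2 * i + 1) + 1)) = (\<lambda>j. P (4 * j + 3))" by presburger
  then show ?thesis using cA unfolding closed_rep_def by simp
qed

lemma neg_ball: "P (4 * j + 1) = Suc k \<Longrightarrow> basic_ball k \<inter> A = {}"
  using neg_eq unfolding enumerated_def by blast

lemma neg_cover: "p \<notin> A \<Longrightarrow> \<exists>j k. P (4 * j + 1) = Suc k \<and> p \<in> basic_ball k"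
  using neg_eq unfolding enumerated_def by blast

lemma pos_iff: "(\<exists>j. P (4 * j + 3) = Suc k) \<longleftrightarrow> basic_ball k \<inter> A \<noteq> {}"
  using pos_eq unfolding enumerated_def by blast

lemma D_attained: "\<exists>a\<in>A. D = dist x a"
  using infdist_attains_inf[OF A_closed ne, of x] by metis

lemma D_le: "a \<in> A \<Longrightarrow> D \<le> dist x a" by (rule infdist_le)

lemma D_nonneg: "0 \<le> D" by (rule infdist_nonneg)

lemma D_ge: "(\<And>a. a \<in> A \<Longrightarrow> s \<le> dist x a) \<Longrightarrow> s \<le> D"
  using D_attained by auto

abbreviation cen :: "nat \<Rightarrow> real ^ 'n" where "cen b \<equiv> qvec (bc b)"
abbreviation rad :: "nat \<Rightarrow> real" where "rad b \<equiv> rv (br b)"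

lemma common_sem:
  assumes "chk_common CARD('n) P m st t"
  shows "basic_ball (fld t 1) \<inter> A \<noteq> {}" "0 < rad (fld t 1)" "rad (fld t 1) \<le> (1/2) ^ m"
    "st = 1 \<or> (2 \<le> st \<and> dist (cen (fld t 1)) (cen (st - 2)) \<le> rad (st - 2) - rad (fld t 1))"
proof -
  show "basic_ball (fld t 1) \<inter> A \<noteq> {}" using assms pos_iff unfolding chk_common_def by blast
  show "0 < rad (fld t 1)" "rad (fld t 1) \<le> (1/2) ^ m" using assms unfolding chk_common_def by auto
  show "st = 1 \<or> (2 \<le> st \<and> dist (cen (fld t 1)) (cen (st - 2)) \<le> rad (st - 2) - rad (fld t 1))"
  proof (cases "st = 1")
    case False
    then have "2 \<le> st" "rad (fld t 1) \<le> rad (st - 2)"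
      "dist (cen (fld t 1)) (cen (st - 2)) ^ 2 \<le> (rad (st - 2) - rad (fld t 1)) ^ 2"
      using assms unfolding chk_common_def by (auto simp: rv_dqq power2_eq_square)
    then show ?thesis by (auto intro: sq_le_imp)
  qed simp
qed

end


context setting begin

lemma C1_real: "chk_C1 CARD('n) Q P t \<longleftrightarrow>
   0 < rv (fld t 4) \<and>
   0 \<le> (1 + E) * rv (fld t 4) - (1/2) ^ fld t 3 - rad (fld t 1) \<and>
   dist (xs (fld t 3)) (cen (fld t 1)) ^ 2 \<le> ((1 + E) * rv (fld t 4) - (1/2) ^ fld t 3 - rad (fld t 1)) ^ 2 \<and>
   0 \<le> real (fld t 6) * (1/2) ^ fld t 5 - (rv (fld t 4) + (1/2) ^ fld t 3) - real CARD('n) * (1/2) ^ fld t 5 \<and>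
   norm (xs (fld t 3)) ^ 2 \<le> (real (fld t 6) * (1/2) ^ fld t 5 - (rv (fld t 4) + (1/2) ^ fld t 3) - real CARD('n) * (1/2) ^ fld t 5) ^ 2 \<and>
   (\<forall>u < (2 * fld t 6 + 1) ^ CARD('n).
      dist (gvec u (fld t 6) (fld t 5)) (xs (fld t 3)) ^ 2 \<le> (rv (fld t 4) + (1/2) ^ fld t 3 + real CARD('n) * (1/2) ^ fld t 5) ^ 2 \<longrightarrow>
      (\<exists>j < fld t 7. P (4 * j + 1) \<noteq> 0 \<and> real CARD('n) * (1/2) ^ fld t 5 < rad (P (4 * j + 1) - 1) \<and>
        dist (gvec u (fld t 6) (fld t 5)) (cen (P (4 * j + 1) - 1)) ^ 2 < (rad (P (4 * j + 1) - 1) - real CARD('n) * (1/2) ^ fld t 5) ^ 2))"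
  unfolding chk_C1_def rle_iff rlt_iff rv_radd rv_rsub rv_rmul rv_rofn rv_rpow2 rv_rzero rv_rdivn[OF Qpos]
    rv_dqq rv_dgq qvec_0 xs_def[symmetric] power2_eq_square
  by (simp add: dist_0_norm)

lemma C2_real: "chk_C2 CARD('n) Q P t \<longleftrightarrow>
   0 < rad (fld t 1) / 2 - (1/2) ^ fld t 3 \<and>
   dist (xs (fld t 3)) (cen (fld t 1)) ^ 2 < (rad (fld t 1) / 2 - (1/2) ^ fld t 3) ^ 2 \<and>
   P (4 * fld t 5 + 3) = Suc (fld t 4) \<and>
   0 \<le> rad (fld t 1) * real Q / real (2 * (Q + 1)) - (1/2) ^ fld t 3 - rad (fld t 4) \<and>
   dist (xs (fld t 3)) (cen (fld t 4)) ^ 2 \<le> (rad (fld t 1) * real Q / real (2 * (Q + 1)) - (1/2) ^ fld t 3 - rad (fld t 4)) ^ 2"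
proof -
  have "2 * (Q + 1) > 0" by simp
  then show ?thesis
    unfolding chk_C2_def rle_iff rlt_iff rv_radd rv_rsub rv_rmul rv_rofn rv_rpow2 rv_rzero rv_rdivn[OF Qpos]
      rv_rdivn[of 2, simplified] rv_dqq xs_def[symmetric] power2_eq_square
    by (simp add: rv_rdivn)
qed

end


context setting begin

lemma C1_sem:
  assumes "chk_C1 CARD('n) Q P t"
  shows "0 < rv (fld t 4)" "dist x (cen (fld t 1)) + rad (fld t 1) \<le> (1 + E) * rv (fld t 4)" "rv (fld t 4) \<le> D"
proof -
  let ?s = "rv (fld t 4)"
  let ?r = "rad (fld t 1)"
  let ?c = "cen (fld t 1)"
  let ?i = "fld t 3"
  let ?g = "fld t 5"
  let ?M = "fld t 6"
  let ?J = "fld t 7"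
  let ?h = "(1/2::real) ^ ?g"
  let ?\<rho> = "real CARD('n) * ?h"
  let ?S = "?s + (1/2) ^ ?i"
  let ?W = "real ?M * ?h - ?S - ?\<rho>"
  let ?R = "(1 + E) * ?s - (1/2) ^ ?i - ?r"
  have C: "0 < ?s" "0 \<le> ?R" "dist (xs ?i) ?c ^ 2 \<le> ?R ^ 2" "0 \<le> ?W" "norm (xs ?i) ^ 2 \<le> ?W ^ 2"
    "\<forall>u < (2 * ?M + 1) ^ CARD('n). dist (gvec u ?M ?g) (xs ?i) ^ 2 \<le> (?S + ?\<rho>) ^ 2 \<longrightarrow>
      (\<exists>j < ?J. P (4 * j + 1) \<noteq> 0 \<and> ?\<rho> < rad (P (4 * j + 1) - 1) \<and>
        dist (gvec u ?M ?g) (cen (P (4 * j + 1) - 1)) ^ 2 < (rad (P (4 * j + 1) - 1) - ?\<rho>) ^ 2)"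
    using assms unfolding C1_real
    by blast+
  have h: "?h > 0" by (simp add:)
  have xi: "dist (xs ?i) x \<le> (1/2) ^ ?i" by (rule xs_close)
  have dR: "dist (xs ?i) ?c \<le> ?R" by (rule sq_le_imp[OF C(3) C(2)])
  show "0 < ?s" by (rule C(1))
  show "dist x ?c + ?r \<le> (1 + E) * ?s"
    using dR xi dist_triangle[of x "?c" "xs ?i"] by (simp add: dist_commute)
  have nW: "norm (xs ?i) \<le> ?W" by (rule sq_le_imp[OF C(5) C(4)])
  have "?s \<le> dist x a" if a: "a \<in> A" for a
  proof (rule ccontr)
    assume "\<not> ?s \<le> dist x a"
    then have xa: "dist x a < ?s" by simp
    obtain z where z: "dist a (\<chi> j. of_int (z j) * ?h) \<le> ?\<rho>" "\<forall>j. \<bar>of_int (z j) * ?h - a $ j\<bar> \<le> ?h / 2"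
      using near_grid[OF h, of a] by blast
    define G :: "real ^ 'n" where "G = (\<chi> j. of_int (z j) * ?h)"
    have dGa: "dist G a \<le> ?\<rho>" using z(1) by (simp add: G_def dist_commute)
    have dax: "dist (xs ?i) a < ?S" using xi xa dist_triangle[of "xs ?i" a x] by (simp add: dist_commute)
    have dG: "dist G (xs ?i) \<le> ?S + ?\<rho>" using dGa dax dist_triangle[of G "xs ?i" a] by (simp add: dist_commute)
    have zM: "\<bar>z j\<bar> \<le> int ?M" for j
    proof -
      have "\<bar>G $ j\<bar> \<le> norm G" by (rule component_le_norm_cart)
      also have "\<dots> \<le> norm (xs ?i) + dist G (xs ?i)" using norm_triangle_ineq[of "xs ?i" "G - xs ?i"]
        by (simp add: dist_norm)
      also have "\<dots> \<le> ?W + (?S + ?\<rho>)" using nW dG by simp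
      also have "\<dots> = real ?M * ?h" by (simp add:)
      finally have "\<bar>of_int (z j)\<bar> * ?h \<le> real ?M * ?h" using h by (simp add: G_def abs_mult)
      then have "\<bar>of_int (z j)\<bar> \<le> (real ?M :: real)" using h by simp
      then show ?thesis by linarith
    qed
    obtain u where u: "u < (2 * ?M + 1) ^ CARD('n)" "(gvec u ?M ?g :: real ^ 'n) = (\<chi> j. of_int (z j) / 2 ^ ?g)"
      using gvec_digits[of z "?M" "?g"] zM by blast
    have Gu: "gvec u ?M ?g = G" unfolding u(2) G_def by (simp add: vec_eq_iff power_one_over)
    have "dist (gvec u ?M ?g) (xs ?i) ^ 2 \<le> (?S + ?\<rho>) ^ 2"
      using dG Gu by (intro power_mono) auto
    then obtain j where j: "P (4 * j + 1) \<noteq> 0" "?\<rho> < rad (P (4 * j + 1) - 1)"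
      "dist G (cen (P (4 * j + 1) - 1)) ^ 2 < (rad (P (4 * j + 1) - 1) - ?\<rho>) ^ 2"
      using C(6) u(1) Gu by blast
    let ?k = "P (4 * j + 1) - 1"
    have k: "P (4 * j + 1) = Suc ?k" using j(1) by (simp add:)
    have "dist G (cen ?k) < rad ?k - ?\<rho>" by (rule sq_less_imp[OF j(3)]) (use j(2) in linarith)
    then have "dist a (cen ?k) < rad ?k" using dGa dist_triangle[of a "cen ?k" G] by (simp add: dist_commute)
    then have "a \<in> basic_ball ?k" by (simp add: basic_ball_eq dist_commute)
    then show False using neg_ball[OF k] a by blast
  qed
  then show "?s \<le> D" by (rule D_ge)
qed

lemma C2_sem:
  assumes "chk_C2 CARD('n) Q P t"
  shows "dist x (cen (fld t 1)) < rad (fld t 1) / 2" "D < rad (fld t 1) / (2 * (1 + E))"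
proof -
  let ?r = "rad (fld t 1)"
  let ?c = "cen (fld t 1)"
  let ?i = "fld t 3"
  let ?b2 = "fld t 4"
  let ?H = "?r / 2 - (1/2) ^ ?i"
  let ?T = "?r * real Q / real (2 * (Q + 1)) - (1/2) ^ ?i - rad ?b2"
  have C: "0 < ?H" "dist (xs ?i) ?c ^ 2 < ?H ^ 2" "P (4 * fld t 5 + 3) = Suc ?b2" "0 \<le> ?T"
    "dist (xs ?i) (cen ?b2) ^ 2 \<le> ?T ^ 2"
    using assms unfolding C2_real by blast+
  have xi: "dist (xs ?i) x \<le> (1/2) ^ ?i" by (rule xs_close)
  have "dist (xs ?i) ?c < ?H" by (rule sq_less_imp[OF C(2)]) (use C(1) in linarith)
  then show "dist x (cen (fld t 1)) < rad (fld t 1) / 2"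
    using xi dist_triangle[of x "?c" "xs ?i"] by (simp add: dist_commute)
  have dT: "dist (xs ?i) (cen ?b2) \<le> ?T" by (rule sq_le_imp[OF C(5) C(4)])
  obtain a2 where a2: "a2 \<in> A" "a2 \<in> basic_ball ?b2" using pos_iff C(3) by blast
  have "dist (cen ?b2) a2 < rad ?b2" using a2 by (simp add: basic_ball_eq)
  then have "dist x a2 < (1/2) ^ ?i + ?T + rad ?b2"
    using xi dT dist_triangle[of x a2 "xs ?i"] dist_triangle[of "xs ?i" a2 "cen ?b2"] by (simp add: dist_commute)
  also have "\<dots> = ?r * real Q / real (2 * (Q + 1))" by (simp add:)
  also have "\<dots> = ?r / (2 * (1 + E))" using Qpos by (simp add: field_simps)
  finally show "D < rad (fld t 1) / (2 * (1 + E))" using D_le[OF a2(1)] by (simp add:)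
qed

definition reg :: "nat \<Rightarrow> (real ^ 'n) set" where
  "reg st = (if st = 1 then UNIV else basic_ball (st - 2))"

definition Inv :: "nat \<Rightarrow> bool" where
  "Inv st \<longleftrightarrow> (D > 0 \<longrightarrow> (\<exists>a\<in>A. a \<in> reg st \<and> dist x a < (1 + E) * D)) \<and> (D = 0 \<longrightarrow> x \<in> reg st)"

lemma E_pos: "E > 0" using Qpos by simp

lemma chk_Inv:
  assumes "chk CARD('n) Q P m st t"
  shows "Inv (Suc (Suc (fld t 1)))"
proof -
  let ?b = "fld t 1"
  have com: "chk_common CARD('n) P m st t" using assms by (simp add: chk_def)
  have reg: "reg (Suc (Suc ?b)) = ball (cen ?b) (rad ?b)" by (simp add: reg_def basic_ball_eq)
  show ?thesis
  proof (cases "fld t 0 = 0")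
    case True
    then have c1: "chk_C1 CARD('n) Q P t" using assms by (simp add: chk_def)
    note s = C1_sem[OF c1]
    have Dpos: "D > 0" using s(1,3) by linarith
    obtain a where a: "a \<in> A" "a \<in> basic_ball ?b" using common_sem(1)[OF com] by blast
    have "dist (cen ?b) a < rad ?b" using a by (simp add: basic_ball_eq)
    then have "dist x a < (1 + E) * rv (fld t 4)" using s(2) dist_triangle[of x a "cen ?b"] by simp
    also have "\<dots> \<le> (1 + E) * D" using s(3) E_pos by (intro mult_left_mono) auto
    finally show ?thesis using a Dpos reg by (auto simp: Inv_def basic_ball_eq)
  next
    case False
    then have c2: "chk_C2 CARD('n) Q P t" using assms by (simp add: chk_def)
    note s = C2_sem[OF c2]
    have r: "rad ?b > 0" using common_sem(2)[OF com] .
    have xin: "x \<in> reg (Suc (Suc ?b))" unfolding reg using s(1) r by (simp add: dist_commute)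
    obtain a where a: "a \<in> A" "D = dist x a" using D_attained by blast
    have "(1 + E) * (2 * (1 + E)) \<ge> 2" using E_pos by (simp add: algebra_simps)
    have "D < rad ?b / 2" using s(2) r E_pos by (smt (verit) divide_strict_left_mono mult_pos_pos)
    then have "dist (cen ?b) a < rad ?b" using s(1) a(2) dist_triangle[of "cen ?b" a x]
      by (simp add: dist_commute)
    then have ain: "a \<in> reg (Suc (Suc ?b))" unfolding reg by simp
    have "D > 0 \<Longrightarrow> dist x a < (1 + E) * D" using a(2) E_pos by simp
    then show ?thesis using a(1) ain xin by (auto simp: Inv_def)
  qed
qed

end


lemma ball_code_pow: "\<exists>b. bc b = v \<and> rv (br b) = (1/2::real) ^ e"
proof -
  obtain b where "bc b = v" "rv (br b) = of_rat ((1/2::rat) ^ e)" using ball_code_ex[of "(1/2::rat)^e" v] by auto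
  then show ?thesis by (intro exI[of _ b]) (simp add: of_rat_power of_rat_divide)
qed

lemma mult_div_cancel4: "(c::real) \<noteq> 0 \<Longrightarrow> c * (y / (4 * c)) = y / 4"
  by (simp add: field_simps)

lemma ar1: "0 \<le> (a::real) \<Longrightarrow> a \<le> q \<Longrightarrow> c < r / 8 \<Longrightarrow> q < r / 16 \<Longrightarrow> d \<le> a + c \<Longrightarrow> d < r / 2 - q"
  by linarith
lemma ar2: "0 \<le> (a::real) \<Longrightarrow> a \<le> q \<Longrightarrow> c < r2 \<Longrightarrow> q < r / 16 \<Longrightarrow> r2 < r / 16 \<Longrightarrow> r / 4 \<le> Zb \<Longrightarrow> d \<le> a + c
   \<Longrightarrow> d \<le> Zb - q - r2"
  by linarith

lemma pow_half_small: "0 < \<epsilon> \<Longrightarrow> \<exists>e\<ge>m. (1/2::real) ^ e < \<epsilon>"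
proof -
  assume "0 < \<epsilon>"
  then obtain e where e: "(1/2::real) ^ e < \<epsilon>" using half_pow_lt by blast
  have "(1/2::real) ^ max e m \<le> (1/2) ^ e" by (rule power_decreasing) auto
  then have "(1/2::real) ^ max e m < \<epsilon>" using e by linarith
  then show ?thesis by (intro exI[of _ "max e m"]) auto
qed

context setting begin

lemma common_intro:
  assumes "P (4 * fld t 2 + 3) = Suc (fld t 1)" "0 < rad (fld t 1)" "rad (fld t 1) \<le> (1/2) ^ m"
    "st = 1 \<or> (2 \<le> st \<and> dist (cen (fld t 1)) (cen (st - 2)) + rad (fld t 1) \<le> rad (st - 2))"
  shows "chk_common CARD('n) P m st t"
proof -
  have "st = 1 \<or> (2 \<le> st \<and> rad (fld t 1) \<le> rad (st - 2) \<and>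
     dist (cen (fld t 1)) (cen (st - 2)) ^ 2 \<le> (rad (st - 2) - rad (fld t 1)) ^ 2)"
  proof (cases "st = 1")
    case False
    then have st2: "2 \<le> st" and H: "dist (cen (fld t 1)) (cen (st - 2)) + rad (fld t 1) \<le> rad (st - 2)"
      using assms(4) by auto
    have "rad (fld t 1) \<le> rad (st - 2)" using H zero_le_dist[of "cen (fld t 1)" "cen (st - 2)"] by linarith
    moreover have "dist (cen (fld t 1)) (cen (st - 2)) ^ 2 \<le> (rad (st - 2) - rad (fld t 1)) ^ 2"
      by (rule power_mono) (use H zero_le_dist[of "cen (fld t 1)" "cen (st - 2)"] in linarith)+
    ultimately show ?thesis using st2 by blast
  qed simp
  then show ?thesis using assms(1-3)
    unfolding chk_common_def rle_iff rlt_iff rv_rsub rv_rmul rv_rzero rv_rpow2 rv_dqq power2_eq_square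
    by auto
qed

lemma inv_fact: "Q > 0 \<Longrightarrow> real Q / real (2 * (Q + 1)) \<ge> 1/4"
  by (simp add: field_simps)

lemma exists_chk:
  assumes inv: "Inv st" and st: "st = 1 \<or> 2 \<le> st"
  shows "\<exists>t. chk CARD('n) Q P m st t"
proof -
  define reg0 where "reg0 = reg st"
  have reg_ball: "st \<noteq> 1 \<Longrightarrow> reg st = ball (cen (st - 2)) (rad (st - 2))"
    by (simp add: reg_def basic_ball_eq)
  have margin: "\<exists>\<mu>>0. \<forall>c r. dist c y + r \<le> \<mu> \<longrightarrow> (st = 1 \<or> (2 \<le> st \<and> dist c (cen (st - 2)) + r \<le> rad (st - 2)))"
    if y: "y \<in> reg st" for y
  proof (cases "st = 1")
    case True then show ?thesis by (intro exI[of _ 1]) auto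
  next
    case False
    then have st2: "2 \<le> st" using st by auto
    have "dist (cen (st - 2)) y < rad (st - 2)" using y reg_ball[OF False] by simp
    show ?thesis
    proof (intro exI[of _ "rad (st - 2) - dist (cen (st - 2)) y"] conjI allI impI)
      show "0 < rad (st - 2) - dist (cen (st - 2)) y" using \<open>dist (cen (st - 2)) y < rad (st - 2)\<close> by simp
      fix c r assume cr: "dist c y + r \<le> rad (st - 2) - dist (cen (st - 2)) y"
      have "dist c (cen (st - 2)) \<le> dist c y + dist (cen (st - 2)) y" by (rule dist_triangle2)
      then have "dist c (cen (st - 2)) + r \<le> rad (st - 2)" using cr by linarith
      then show "st = 1 \<or> (2 \<le> st \<and> dist c (cen (st - 2)) + r \<le> rad (st - 2))" using st2 by blast
    qed
  qed
  show ?thesis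
  proof (cases "D > 0")
    case Dpos: True
    then obtain a where a: "a \<in> A" "a \<in> reg st" "dist x a < (1 + E) * D" using inv by (auto simp: Inv_def)
    define \<eta> where "\<eta> = (1 + E) * D - dist x a"
    have \<eta>: "\<eta> > 0" using a(3) by (simp add: \<eta>_def)
    obtain \<mu> where \<mu>: "\<mu> > 0" "\<And>c r. dist c a + r \<le> \<mu> \<Longrightarrow> st = 1 \<or> (2 \<le> st \<and> dist c (cen (st - 2)) + r \<le> rad (st - 2))"
      using margin[OF a(2)] by blast
    obtain e where e: "e \<ge> m" "(1/2::real) ^ e < min (\<mu> / 2) (\<eta> / 8)"
      using pow_half_small[of "min (\<mu> / 2) (\<eta> / 8)" m] \<mu> \<eta> by auto
    define r :: real where "r = (1/2) ^ e"
    have r: "0 < r" "r \<le> (1/2) ^ m" "r < \<mu> / 2" "r < \<eta> / 8"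
      using e by (auto simp: r_def intro: power_decreasing)
    obtain v where v: "dist (qvec v :: real ^ 'n) a < r" using qvec_dense r(1) by blast
    obtain b where b: "bc b = v" "rad b = r" using ball_code_pow[of v e] by (auto simp: r_def)
    have ab: "a \<in> basic_ball b" using v b by (simp add: basic_ball_eq dist_commute)
    then obtain j where j: "P (4 * j + 3) = Suc b" using pos_iff a(1) by blast
    have nest: "st = 1 \<or> (2 \<le> st \<and> dist (cen b) (cen (st - 2)) + rad b \<le> rad (st - 2))"
      using \<mu>(2)[of "cen b" r] v b r by simp
    have "0 \<le> max (D / 2) (D - \<eta> / (4 * (1 + E)))" using Dpos by simp
    moreover have "max (D / 2) (D - \<eta> / (4 * (1 + E))) < D"
    proof -
      have "0 < 1 + E" using E_pos by linarith
      then have "4 * (1 + E) > 0" by simp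
      then have "\<eta> / (4 * (1 + E)) > 0" using \<eta> by (intro divide_pos_pos) auto
      then show ?thesis using Dpos by simp
    qed
    ultimately obtain p e' where pe: "max (D / 2) (D - \<eta> / (4 * (1 + E))) < real p / 2 ^ e'" "real p / 2 ^ e' < D"
      using dyadic_between by blast
    define s where "s = real p / 2 ^ e'"
    define sc where "sc = rt p 0 (2 ^ e' - 1)"
    have sc: "rv sc = s" unfolding sc_def s_def by (rule rv_dyadic)
    have s12: "D / 2 < s" "D - \<eta> / (4 * (1 + E)) < s" using pe(1) unfolding s_def max_less_iff_conj by auto
    have sD: "s < D" using pe(2) by (simp add: s_def)
    have s: "0 < s" "s < D" "D - \<eta> / (4 * (1 + E)) < s" using s12 sD Dpos by linarith+
    define \<gamma> where "\<gamma> = D - s"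
    have \<gamma>: "\<gamma> > 0" using s by (simp add: \<gamma>_def)
    obtain i where i: "(1/2::real) ^ i < min (\<eta> / 8) (\<gamma> / 8)"
      using half_pow_lt[of "min (\<eta> / 8) (\<gamma> / 8)"] \<eta> \<gamma> by auto
    have i1: "(1/2::real) ^ i < \<eta> / 8" and i2: "(1/2::real) ^ i < \<gamma> / 8" using i by auto
    define K where "K = cball x (D - \<gamma> / 2)"
    define \<C> :: "(real ^ 'n) set set" where "\<C> = basic_ball ` enumerated (\<lambda>j. P (4 * j + 1))"
    have KA: "K \<subseteq> - A"
    proof
      fix p assume "p \<in> K"
      then have "dist x p < D" using \<gamma> by (simp add: K_def)
      then show "p \<in> - A" using D_le by force
    qed
    have KC: "K \<subseteq> \<Union>\<C>" using KA neg_eq by (simp add: \<C>_def)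
    have xK: "x \<in> K" using s \<gamma> by (simp add: K_def \<gamma>_def)
    have Cne: "\<C> \<noteq> {}" using KC xK by auto
    obtain \<delta> where \<delta>: "0 < \<delta>" "\<And>T. T \<subseteq> K \<Longrightarrow> diameter T < \<delta> \<Longrightarrow> \<exists>B\<in>\<C>. T \<subseteq> B"
    proof -
      have opn: "\<And>B. B \<in> \<C> \<Longrightarrow> open B" by (auto simp: \<C>_def basic_ball_eq)
      have cK: "compact K" by (simp add: K_def)
      show ?thesis using Lebesgue_number_lemma[OF cK Cne KC opn] that by blast
    qed
    obtain g where g: "(1/2::real) ^ g < min (\<delta> / 2) (\<gamma> / 8) / real CARD('n)"
      using half_pow_lt[of "min (\<delta> / 2) (\<gamma> / 8) / real CARD('n)"] \<delta> \<gamma> by auto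
    define h :: real where "h = (1/2) ^ g"
    define \<rho> where "\<rho> = real CARD('n) * h"
    have h: "h > 0" by (simp add: h_def)
    have \<rho>: "0 < \<rho>" "\<rho> < \<delta> / 2" "\<rho> < \<gamma> / 8"
      using g h by (auto simp: \<rho>_def h_def field_simps)
    define S where "S = s + (1/2) ^ i"
    define M :: nat where "M = nat \<lceil>(S + \<rho> + norm (xs i)) / h\<rceil>"
    have Mh: "S + \<rho> + norm (xs i) \<le> real M * h"
    proof -
      have "(S + \<rho> + norm (xs i)) / h \<le> real M" unfolding M_def by linarith
      then show ?thesis using h by (simp add: field_simps)
    qed
    define W where "W = real M * h - S - \<rho>"
    have W: "norm (xs i) \<le> W" using Mh by (simp add: W_def)
    define B where "B = (2 * M + 1) ^ CARD('n)"
    define good where "good u j' \<longleftrightarrow> P (4 * j' + 1) \<noteq> 0 \<and> \<rho> < rad (P (4 * j' + 1) - 1) \<and>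
        dist (gvec u M g :: real ^ 'n) (cen (P (4 * j' + 1) - 1)) ^ 2 < (rad (P (4 * j' + 1) - 1) - \<rho>) ^ 2" for u j'
    have cover: "\<exists>j'. good u j'" if u: "dist (gvec u M g :: real ^ 'n) (xs i) ^ 2 \<le> (S + \<rho>) ^ 2" for u
    proof -
      let ?G = "gvec u M g :: real ^ 'n"
      have "0 < S" unfolding S_def using s(1) by (simp add: add_pos_pos)
      then have dG: "dist ?G (xs i) \<le> S + \<rho>" using \<rho>(1) by (intro sq_le_imp[OF u]) linarith
      have TK: "cball ?G \<rho> \<subseteq> K"
      proof
        fix p assume "p \<in> cball ?G \<rho>"
        then have "dist ?G p \<le> \<rho>" by simp
        then have "dist x p \<le> (1/2) ^ i + (S + \<rho>) + \<rho>"
          using xs_close[of i] dG dist_triangle[of x p "xs i"] dist_triangle[of "xs i" p ?G]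
          by (simp add: dist_commute)
        also have "\<dots> \<le> D - \<gamma> / 2"
        proof -
          have e1: "(1/2) ^ i + (S + \<rho>) + \<rho> = s + 2 * (1/2::real) ^ i + 2 * \<rho>" by (simp add: S_def)
          have e2: "D - \<gamma> / 2 = s + \<gamma> / 2" by (simp add: \<gamma>_def field_simps)
          show ?thesis unfolding e1 e2 using i2 \<rho>(3) by linarith
        qed
        finally show "p \<in> K" by (simp add: K_def)
      qed
      have "diameter (cball ?G \<rho>) < \<delta>" using \<rho> by simp
      then obtain B0 where "B0 \<in> \<C>" "cball ?G \<rho> \<subseteq> B0" using \<delta>(2) TK by blast
      then obtain k where k: "k \<in> enumerated (\<lambda>j. P (4 * j + 1))" "cball ?G \<rho> \<subseteq> ball (cen k) (rad k)"
        by (auto simp: \<C>_def basic_ball_eq)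
      obtain j' where j': "P (4 * j' + 1) = Suc k" using k(1) by (auto simp: enumerated_def)
      have dk: "dist ?G (cen k) + \<rho> < rad k" using k(2) \<rho> by (simp add: cball_subset_ball_iff)
      have r1: "\<rho> < rad k" using dk zero_le_dist[of ?G "cen k"] by linarith
      have r2: "dist ?G (cen k) ^ 2 < (rad k - \<rho>) ^ 2" by (rule power_strict_mono) (use dk in auto)
      have "good u j'" unfolding good_def using j' r1 r2 by simp
      then show ?thesis by blast
    qed
    define jf where "jf u = (SOME j'. good u j')" for u
    define J where "J = Suc (\<Sum>u<B. jf u)"
    have Jbound: "jf u < J" if "u < B" for u
    proof -
      have "jf u \<le> (\<Sum>u<B. jf u)" using that by (intro member_le_sum) auto
      then show ?thesis by (simp add: J_def)
    qed
    define t where "t = list_encode [0, b, j, i, sc, g, M, J]"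
    have f: "fld t 0 = 0" "fld t 1 = b" "fld t 2 = j" "fld t 3 = i" "fld t 4 = sc" "fld t 5 = g"
      "fld t 6 = M" "fld t 7 = J" by (simp_all add: t_def del: list_encode.simps)
    have common: "chk_common CARD('n) P m st t"
      apply (rule common_intro)
      apply (unfold f)
      using j r nest b by simp_all
    have dxc: "dist (xs i) (cen b) \<le> (1 + E) * s - (1/2) ^ i - r"
    proof -
      have "dist (xs i) (cen b) \<le> (1/2) ^ i + (dist x a + r)"
        using xs_close[of i] dist_triangle[of "xs i" "cen b" x] dist_triangle[of x "cen b" a] v b
        by (simp add: dist_commute)
      also have "\<dots> = (1/2) ^ i + (1 + E) * D - \<eta> + r" by (simp add: \<eta>_def)
      also have "\<dots> \<le> (1 + E) * s - (1/2) ^ i - r"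
      proof -
        have "(1 + E) * (D - \<eta> / (4 * (1 + E))) \<le> (1 + E) * s" using s(3) E_pos by (intro mult_left_mono) auto
        moreover have "(1 + E) * (D - \<eta> / (4 * (1 + E))) = (1 + E) * D - \<eta> / 4"
        proof -
          have ne: "1 + E \<noteq> 0" using E_pos by linarith
          have "(1 + E) * (\<eta> / (4 * (1 + E))) = \<eta> / 4" by (rule mult_div_cancel4[OF ne])
          then show ?thesis by (simp add: right_diff_distrib)
        qed
        ultimately have "(1 + E) * D - \<eta> / 4 \<le> (1 + E) * s" by simp
        then show ?thesis using i r by linarith
      qed
      finally show ?thesis .
    qed
    have c1: "chk_C1 CARD('n) Q P t"
      unfolding C1_real f sc
    proof (intro conjI allI impI)
      show "0 < s" by (rule s(1))
      have dxc': "dist (xs i) (cen b) \<le> (1 + E) * s - (1/2) ^ i - rad b" using dxc b(2) by simp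
      show "0 \<le> (1 + E) * s - (1/2) ^ i - rad b" using dxc' zero_le_dist order_trans by blast
      show "dist (xs i) (cen b) ^ 2 \<le> ((1 + E) * s - (1/2) ^ i - rad b) ^ 2"
        using dxc' by (intro power_mono) auto
      have W': "norm (xs i) \<le> real M * (1/2) ^ g - (s + (1/2) ^ i) - real CARD('n) * (1/2) ^ g"
        using W by (simp add: W_def S_def \<rho>_def h_def)
      show "0 \<le> real M * (1/2) ^ g - (s + (1/2) ^ i) - real CARD('n) * (1/2) ^ g"
        using W' norm_ge_zero order_trans by blast
      show "norm (xs i) ^ 2 \<le> (real M * (1/2) ^ g - (s + (1/2) ^ i) - real CARD('n) * (1/2) ^ g) ^ 2"
        using W' by (intro power_mono) auto
      fix u assume "u < (2 * M + 1) ^ CARD('n)"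
        and du: "dist (gvec u M g) (xs i) ^ 2 \<le> (s + (1/2) ^ i + real CARD('n) * (1/2) ^ g) ^ 2"
      then have uB: "u < B" by (simp add: B_def)
      have "good u (jf u)" unfolding jf_def
        by (rule someI_ex, rule cover) (use du in \<open>simp add: S_def \<rho>_def h_def\<close>)
      then show "\<exists>j<J. P (4 * j + 1) \<noteq> 0 \<and> real CARD('n) * (1/2) ^ g < rad (P (4 * j + 1) - 1) \<and>
          dist (gvec u M g) (cen (P (4 * j + 1) - 1)) ^ 2 < (rad (P (4 * j + 1) - 1) - real CARD('n) * (1/2) ^ g) ^ 2"
        using Jbound[OF uB] unfolding good_def \<rho>_def h_def by blast
    qed
    show ?thesis using common c1 f by (intro exI[of _ t]) (simp add: chk_def)
  next
    case False
    then have D0: "D = 0" using D_nonneg by simp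
    then have xA: "x \<in> A" using in_closed_iff_infdist_zero[OF A_closed ne] by simp
    have xr: "x \<in> reg st" using inv D0 by (simp add: Inv_def)
    obtain \<mu> where \<mu>: "\<mu> > 0" "\<And>c r. dist c x + r \<le> \<mu> \<Longrightarrow> st = 1 \<or> (2 \<le> st \<and> dist c (cen (st - 2)) + r \<le> rad (st - 2))"
      using margin[OF xr] by blast
    obtain e where e: "e \<ge> m" "(1/2::real) ^ e < \<mu> / 2"
      using pow_half_small[of "\<mu> / 2" m] \<mu> by auto
    define r :: real where "r = (1/2) ^ e"
    have r: "0 < r" "r \<le> (1/2) ^ m" "r < \<mu> / 2"
      using e by (auto simp: r_def intro: power_decreasing)
    obtain v where v: "dist (qvec v :: real ^ 'n) x < r / 8" using qvec_dense r(1) by (metis zero_less_divide_iff zero_less_numeral)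
    obtain b where b: "bc b = v" "rad b = r" using ball_code_pow[of v e] by (auto simp: r_def)
    have "x \<in> basic_ball b" using v b r by (simp add: basic_ball_eq dist_commute)
    then obtain j where j: "P (4 * j + 3) = Suc b" using pos_iff xA by blast
    have nest: "st = 1 \<or> (2 \<le> st \<and> dist (cen b) (cen (st - 2)) + rad b \<le> rad (st - 2))"
      using \<mu>(2)[of "cen b" r] v b r by simp
    obtain i where i: "(1/2::real) ^ i < r / 16" using half_pow_lt[of "r / 16"] r by auto
    obtain e2 where e2: "e2 \<ge> 0" "(1/2::real) ^ e2 < r / 16" using pow_half_small[of "r / 16" 0] r by auto
    define r2 :: real where "r2 = (1/2) ^ e2"
    have r2: "0 < r2" "r2 < r / 16" using e2 by (auto simp: r2_def)
    obtain v2 where v2: "dist (qvec v2 :: real ^ 'n) x < r2" using qvec_dense r2(1) by blast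
    obtain b2 where b2: "bc b2 = v2" "rad b2 = r2" using ball_code_pow[of v2 e2] by (auto simp: r2_def)
    have "x \<in> basic_ball b2" using v2 b2 by (simp add: basic_ball_eq dist_commute)
    then obtain j2 where j2: "P (4 * j2 + 3) = Suc b2" using pos_iff xA by blast
    define t where "t = list_encode [1, b, j, i, b2, j2]"
    have f: "fld t 0 = 1" "fld t 1 = b" "fld t 2 = j" "fld t 3 = i" "fld t 4 = b2" "fld t 5 = j2"
      by (simp_all add: t_def del: list_encode.simps)
    have common: "chk_common CARD('n) P m st t"
      apply (rule common_intro)
      apply (unfold f)
      using j r nest b by simp_all
    have xi: "dist (xs i) x \<le> (1/2) ^ i" by (rule xs_close)
    have d1: "dist (xs i) (cen b) < r / 2 - (1/2) ^ i"
    proof (rule ar1[OF zero_le_dist xi _ i])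
      show "dist x (cen b) < r / 8" using v b by (simp add: dist_commute)
      show "dist (xs i) (cen b) \<le> dist (xs i) x + dist x (cen b)" by (rule dist_triangle)
    qed
    have q4: "r * real Q / real (2 * (Q + 1)) \<ge> r / 4"
      using inv_fact[OF Qpos] r(1) by (simp add: field_simps)
    have d2: "dist (xs i) (cen b2) \<le> r * real Q / real (2 * (Q + 1)) - (1/2) ^ i - r2"
    proof (rule ar2[OF zero_le_dist xi _ i r2(2) q4])
      show "dist x (cen b2) < r2" using v2 b2 by (simp add: dist_commute)
      show "dist (xs i) (cen b2) \<le> dist (xs i) x + dist x (cen b2)" by (rule dist_triangle)
    qed
    have c2: "chk_C2 CARD('n) Q P t"
      unfolding C2_real f
    proof (intro conjI)
      show "0 < rad b / 2 - (1/2) ^ i" using b(2) i r(1) by linarith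
      show "dist (xs i) (cen b) ^ 2 < (rad b / 2 - (1/2) ^ i) ^ 2"
        using d1 b by (intro power_strict_mono) auto
      show "P (4 * j2 + 3) = Suc b2" by (rule j2)
      show "0 \<le> rad b * real Q / real (2 * (Q + 1)) - (1/2) ^ i - rad b2"
        using d2 b b2 by (meson zero_le_dist order_trans)
      show "dist (xs i) (cen b2) ^ 2 \<le> (rad b * real Q / real (2 * (Q + 1)) - (1/2) ^ i - rad b2) ^ 2"
        using d2 b b2 by (intro power_mono) auto
    qed
    show ?thesis using common c2 f by (intro exI[of _ t]) (simp add: chk_def)
  qed
qed

end


context setting begin

definition cs :: "nat \<Rightarrow> nat" where "cs m = cst CARD('n) Q P m"

lemma cs_simps: "cs 0 = 1" "cs (Suc m) = Suc (Suc (fld (LEAST t. chk CARD('n) Q P m (cs m) t) 1))"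
  by (simp_all add: cs_def)

lemma cs_shape: "cs m = 1 \<or> 2 \<le> cs m" by (cases m) (auto simp: cs_simps)

lemma Inv_1: "Inv 1"
proof -
  obtain a where a: "a \<in> A" "D = dist x a" using D_attained by blast
  have "D > 0 \<Longrightarrow> dist x a < (1 + E) * D" using a(2) E_pos by simp
  then show ?thesis using a(1) by (auto simp: Inv_def reg_def)
qed

lemma cs_props: "Inv (cs m) \<and> (\<exists>t. chk CARD('n) Q P m (cs m) t)"
proof (induction m)
  case 0
  then show ?case using Inv_1 exists_chk[of 1 0] by (simp add: cs_simps)
next
  case (Suc m)
  then obtain t where "chk CARD('n) Q P m (cs m) t" by blast
  then have c: "chk CARD('n) Q P m (cs m) (LEAST t. chk CARD('n) Q P m (cs m) t)" by (rule LeastI)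
  have I: "Inv (cs (Suc m))" using chk_Inv[OF c] by (simp add: cs_simps)
  then show ?case using exists_chk[OF I cs_shape] by blast
qed

definition tm :: "nat \<Rightarrow> nat" where "tm m = (LEAST t. chk CARD('n) Q P m (cs m) t)"
definition bm :: "nat \<Rightarrow> nat" where "bm m = fld (tm m) 1"

lemma chk_tm: "chk CARD('n) Q P m (cs m) (tm m)"
  unfolding tm_def using cs_props[of m] by (metis LeastI)

lemma cs_Suc: "cs (Suc m) = Suc (Suc (bm m))" by (simp add: bm_def tm_def cs_simps)

lemma bm_props:
  "basic_ball (bm m) \<inter> A \<noteq> {}" "0 < rad (bm m)" "rad (bm m) \<le> (1/2) ^ m"
  using common_sem[of m "cs m" "tm m"] chk_tm[of m] by (auto simp: chk_def bm_def)

lemma bm_nest: "dist (cen (bm (Suc m))) (cen (bm m)) \<le> rad (bm m) - rad (bm (Suc m))"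
proof -
  have "chk_common CARD('n) P (Suc m) (cs (Suc m)) (tm (Suc m))" using chk_tm[of "Suc m"] by (simp add: chk_def)
  from common_sem(4)[OF this] have "dist (cen (fld (tm (Suc m)) 1)) (cen (cs (Suc m) - 2)) \<le> rad (cs (Suc m) - 2) - rad (fld (tm (Suc m)) 1)"
    unfolding cs_Suc by simp
  then show ?thesis unfolding cs_Suc bm_def by simp
qed

lemma bm_chain: "n \<le> k \<Longrightarrow> dist (cen (bm n)) (cen (bm k)) \<le> rad (bm n) - rad (bm k)"
proof (induction k)
  case 0 then show ?case by simp
next
  case (Suc k)
  show ?case
  proof (cases "n = Suc k")
    case True then show ?thesis by simp
  next
    case False
    then have "n \<le> k" using Suc.prems by simp
    then have "dist (cen (bm n)) (cen (bm k)) \<le> rad (bm n) - rad (bm k)" by (rule Suc.IH)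
    moreover have "dist (cen (bm (Suc k))) (cen (bm k)) \<le> rad (bm k) - rad (bm (Suc k))" by (rule bm_nest)
    moreover have "dist (cen (bm n)) (cen (bm (Suc k))) \<le> dist (cen (bm n)) (cen (bm k)) + dist (cen (bm (Suc k))) (cen (bm k))"
      by (rule dist_triangle2)
    ultimately show ?thesis by linarith
  qed
qed

lemma bm_close: "n \<le> k \<Longrightarrow> dist (cen (bm n)) (cen (bm k)) \<le> (1/2) ^ n"
  using bm_chain[of n k] bm_props(2)[of k] bm_props(3)[of n] by linarith

lemma cen_Cauchy: "Cauchy (\<lambda>m. cen (bm m))"
proof (rule metric_CauchyI)
  fix e :: real assume "e > 0"
  then obtain N where N: "(1/2::real) ^ N < e / 2" using half_pow_lt[of "e/2"] by auto
  have "dist (cen (bm m)) (cen (bm n)) < e" if "m \<ge> N" "n \<ge> N" for m n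
  proof -
    have "dist (cen (bm N)) (cen (bm m)) \<le> (1/2) ^ N" "dist (cen (bm N)) (cen (bm n)) \<le> (1/2) ^ N"
      using bm_close that by auto
    moreover have "dist (cen (bm m)) (cen (bm n)) \<le> dist (cen (bm N)) (cen (bm m)) + dist (cen (bm N)) (cen (bm n))"
      by (rule dist_triangle3)
    ultimately show ?thesis using N by linarith
  qed
  then show "\<exists>M. \<forall>m\<ge>M. \<forall>n\<ge>M. dist (cen (bm m)) (cen (bm n)) < e" by blast
qed

definition ylim :: "real ^ 'n" where "ylim = lim (\<lambda>m. cen (bm m))"

lemma ylim: "(\<lambda>m. cen (bm m)) \<longlonglongrightarrow> ylim"
  unfolding ylim_def using cen_Cauchy by (simp add: Cauchy_convergent_iff convergent_LIMSEQ_iff)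

lemma ylim_close: "dist (cen (bm n)) ylim \<le> rad (bm n)"
proof -
  have "(\<lambda>k. dist (cen (bm n)) (cen (bm k))) \<longlonglongrightarrow> dist (cen (bm n)) ylim" by (intro tendsto_intros ylim)
  moreover have "\<forall>k\<ge>n. dist (cen (bm n)) (cen (bm k)) \<le> rad (bm n)"
    using bm_chain bm_props(2) by (smt (verit))
  ultimately show ?thesis by (intro LIMSEQ_le_const2) auto
qed

lemma small: "(\<And>m. (a::real) \<le> b + c * (1/2) ^ m) \<Longrightarrow> a \<le> b"
proof (rule ccontr)
  assume H: "\<And>m. a \<le> b + c * (1/2) ^ m" and "\<not> a \<le> b"
  then have "a - b > 0" by simp
  show False
  proof (cases "c \<le> 0")
    case True then show False using H[of 0] \<open>a - b > 0\<close> by simp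
  next
    case False
    then obtain m where "(1/2::real) ^ m < (a - b) / c" using half_pow_lt[of "(a - b) / c"] \<open>a - b > 0\<close> by auto
    then have "c * (1/2) ^ m < a - b" using False by (simp add: field_simps)
    then show False using H[of m] by linarith
  qed
qed

lemma ylim_in_A: "ylim \<in> A"
proof -
  have "infdist ylim A \<le> 0 + 2 * (1/2) ^ m" for m
  proof -
    obtain a where a: "a \<in> A" "a \<in> basic_ball (bm m)" using bm_props(1) by blast
    have "dist (cen (bm m)) a < rad (bm m)" using a by (simp add: basic_ball_eq)
    then have "dist ylim a \<le> 2 * rad (bm m)"
      using ylim_close[of m] dist_triangle[of ylim a "cen (bm m)"] by (simp add: dist_commute)
    then show ?thesis using infdist_le[OF a(1), of ylim] bm_props(3)[of m] by linarith
  qed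
  then have "infdist ylim A \<le> 0" by (rule small)
  then have "infdist ylim A = 0" using infdist_nonneg[of ylim A] by linarith
  then show ?thesis using in_closed_iff_infdist_zero[OF A_closed ne] by blast
qed

lemma ylim_dist: "dist x ylim \<le> (1 + E) * D"
proof (cases "D > 0")
  case True
  have "dist x ylim \<le> (1 + E) * D + 2 * (1/2) ^ m" for m
  proof -
    have "Inv (cs (Suc m))" using cs_props by blast
    then obtain a where a: "a \<in> A" "a \<in> basic_ball (bm m)" "dist x a < (1 + E) * D"
      using True by (auto simp: Inv_def reg_def cs_Suc)
    have "dist a (cen (bm m)) < rad (bm m)" using a by (simp add: basic_ball_eq dist_commute)
    then have "dist x ylim \<le> dist x a + 2 * rad (bm m)"
      using ylim_close[of m] dist_triangle[of x ylim a] dist_triangle[of a ylim "cen (bm m)"] by simp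
    then show ?thesis using a(3) bm_props(3)[of m] by linarith
  qed
  then show ?thesis by (rule small)
next
  case False
  then have D0: "D = 0" using D_nonneg by simp
  have "dist x ylim \<le> 0 + 2 * (1/2) ^ m" for m
  proof -
    have "Inv (cs (Suc m))" using cs_props by blast
    then have "x \<in> basic_ball (bm m)" using D0 by (auto simp: Inv_def reg_def cs_Suc)
    then have "dist (cen (bm m)) x < rad (bm m)" by (simp add: basic_ball_eq)
    then have "dist x ylim \<le> 2 * rad (bm m)"
      using ylim_close[of m] dist_triangle[of x ylim "cen (bm m)"] by (simp add: dist_commute)
    then show ?thesis using bm_props(3)[of m] by linarith
  qed
  then have "dist x ylim \<le> 0" by (rule small)
  then show ?thesis using D0 by simp
qed

lemma output_cauchy: "cauchy_rep (\<lambda>n. bc (cs (Suc n) - 2)) ylim"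
proof -
  have q: "qvec (bc (cs (Suc n) - 2)) = cen (bm n)" for n by (simp add: cs_Suc)
  show ?thesis unfolding cauchy_rep_def q using bm_close ylim by auto
qed

lemma output_computes: "computes_on (hfun CARD('n) Q) P (\<lambda>n. bc (cs (Suc n) - 2))"
  using computes_hfun[of "CARD('n)" Q P] cs_props unfolding cs_def by blast

end


theorem theorem5p9:
  fixes \<epsilon> :: real
  assumes "\<epsilon> > 0"
  shows "computable_mv (pair_rep cauchy_rep closed_rep) (cauchy_rep :: (nat \<Rightarrow> nat) \<Rightarrow> real ^ 'n::finite \<Rightarrow> bool)
           (eps_proj_dom :: ((real ^ 'n) \<times> (real ^ 'n) set) set) (eps_proj \<epsilon>)"
proof -
  define Q where "Q = nat \<lceil>1 / \<epsilon>\<rceil>"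
  have Qge: "1 / \<epsilon> \<le> real Q" unfolding Q_def by linarith
  have Q: "Q > 0" using assms Qge by (simp add: Q_def)
  have EQ: "1 / real Q \<le> \<epsilon>"
  proof -
    have "1 \<le> \<epsilon> * real Q" using Qge assms by (simp add: field_simps)
    then show ?thesis using Q by (simp add: field_simps)
  qed
  show ?thesis unfolding computable_mv_def
  proof (rule exI, intro conjI allI impI)
    show "total_recursive (hfun CARD('n) Q)" by (rule rf_total_recursive[OF rf_hfun])
    fix p :: "nat \<Rightarrow> nat" and xA :: "(real ^ 'n) \<times> (real ^ 'n) set"
    assume H: "pair_rep cauchy_rep closed_rep p xA \<and> xA \<in> eps_proj_dom"
    obtain x A where xA: "xA = (x, A)" by (cases xA)
    have S: "setting p x A Q"
      using H Q by unfold_locales (auto simp: pair_rep_def eps_proj_dom_def xA)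
    interpret setting p x A Q by (rule S)
    have "dist x ylim \<le> (1 + \<epsilon>) * infdist x A"
    proof -
      have "(1 + 1 / real Q) * infdist x A \<le> (1 + \<epsilon>) * infdist x A"
        using EQ infdist_nonneg[of x A] by (intro mult_right_mono) auto
      then show ?thesis using ylim_dist by linarith
    qed
    then have "ylim \<in> eps_proj \<epsilon> xA" using ylim_in_A by (simp add: eps_proj_def xA)
    then show "\<exists>q y. computes_on (hfun CARD('n) Q) p q \<and> cauchy_rep q y \<and> y \<in> eps_proj \<epsilon> xA"
      using output_computes output_cauchy by blast
  qed
qed


end
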